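(* Under the CME setup in the context: (1) (A) implies $f_g\in\mathcal H$ for every $g\in\mathcal G$. (2) (B) implies $[f_g]\in\mathcal H_{\mathcal C}$ for every $g\in\mathcal G$. (3) (C) implies $P_{\overline{\mathcal H_{\mathcal C}}}[f_g]\in\mathcal H_{\mathcal C}$ for every $g$, where the closure is in $L^2_{\mathcal C}(\mathbb P_X)$. (4) ($^u$C) implies $P_{\overline{\mathcal H}}f_g\in\mathcal H$ for every $g$, where the closure is in $L^2(\mathbb P_X)$. (5) (A$^*$) implies $f_g\in\overline{\mathcal H}^{L^2(\mathbb P_X)}$ for every $g$. (6) (B$^*$) implies $[f_g]\in\overline{\mathcal H_{\mathcal C}}^{L^2_{\mathcal C}(\mathbb P_X)}$ for every $g$. Furthermore, (C) implies $\operatorname{ran}C_{VU}\subseteq\operatorname{ran}C_V$, and ($^u$C) implies $\operatorname{ran}{}^uC_{VU}\subseteq\operatorname{ran}{}^uC_V$.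
   Context: CME setup: - $X:\Omega\to\mathcal X$ and $Y:\Omega\to\mathcal Y$ are random variables, with $\mathcal X$ a measurable space and $\mathcal Y$ a Borel space. - $k$ and $\ell$ are measurable symmetric positive definite kernels on $\mathcal X$ and $\mathcal Y$, with separable RKHSs $\mathcal H$ and $\mathcal G$ respectively. - The feature maps are $\varphi(x)=k(x,\cdot)$, which is assumed injective, and $\psi(y)=\ell(y,\cdot)$. - $V:=\varphi(X)\in L^2(\mathbb P;\mathcal H)$ and $U:=\psi(Y)\in L^2(\mathbb P;\mathcal G)$. - For $h\in\mathcal H$: $\|h\|_{\mathcal H}=0$ iff $h=0$ $\mathbb P_X$-a.e.; so $\mathcal H$ is viewed as a subspace of $L^2(\mathbb P_X)$. - For a separable Hilbert space $\mathcal K$, $\mathcal C\subset L^2(\mathbb P_X;\mathcal K)$ is the subspace of $\mathbb P_X$-a.e. constant functions, and $L^2_{\mathcal C}(\mathbb P_X;\mathcal K):=L^2(\mathbb P_X;\mathcal K)/\mathcal C$, with inner product $\langle[f_1],[f_2]\rangle=\langle f_1-\mathbb E f_1(X),f_2-\mathbb E f_2(X)\rangle_{L^2(\mathbb P_X;\mathcal K)}$. For a subspace $\mathcal U$, $\mathcal U_{\mathcal C}:=\mathcal U/(\mathcal U\cap\mathcal C)$. When $\mathcal K=\mathbb R$ we write $L^2_{\mathcal C}(\mathbb P_X)$. - $\mathfrak m(x):=\mathbb E[U|X=x]$, a version of the conditional mean in $L^2(\mathbb P_X;\mathcal G)$, and $f_g(x):=\langle g,\mathfrak m(x)\rangle_{\mathcal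 G}$ for $g\in\mathcal G$. - The Hilbert tensor product $\mathcal G\otimes\mathcal H$ is identified with functions $\mathcal X\to\mathcal G$ via $(g\otimes h)(x)=h(x)g$; thus $\mathcal G\otimes\mathcal H\subseteq L^2(\mathbb P_X;\mathcal G)$. It is also identified with Hilbert–Schmidt operators $\mathcal H\to\mathcal G$ via $(g\otimes h)(h')=\langle h,h'\rangle g$. - Assumptions (projections are orthogonal): (A) $\mathfrak m\in\mathcal G\otimes\mathcal H$; (B) $[\mathfrak m]\in(\mathcal G\otimes\mathcal H)_{\mathcal C}$; (C) $P_{\overline{(\mathcal G\otimes\mathcal H)_{\mathcal C}}}[\mathfrak m]\in(\mathcal G\otimes\mathcal H)_{\mathcal C}$, with closure in $L^2_{\mathcal C}(\mathbb P_X;\mathcal G)$; ($^u$C) $P_{\overline{\mathcal G\otimes\mathcal H}}\mathfrak m\in\mathcal G\otimes\mathcal H$, with closure in $L^2(\mathbb P_X;\mathcal G)$; (A$^*$) $\mathfrak m\in\overline{\mathcal G\otimes\mathcal H}^{L^2(\mathbb P_X;\mathcal G)}$; (B$^*$) $[\mathfrak m]\in\overline{(\mathcal G\otimes\mathcal H)_{\mathcal C}}^{L^2_{\mathcal C}(\mathbb P_X;\mathcal G)}$. - Centred covariances: $C_{VU}=\mathbb E[(V-\mu_V)\otimes(U-\mu_U)]$ and $C_V=C_{VV}$. Uncentred covariances: ${}^uC_{VU}=\mathbb E[V\otimes U]$ and ${}^uC_V=\mathbb E[V\otimes V]$. *)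

theory Defs
  imports "HOL-Probability.Probability"
begin

text \<open>Hilbert spaces are modelled as types of sort real_inner, banach, second_countable_topology
  (second countability = separability). An RKHS is represented by its feature map
  phi :: 'x => 'h; an element h of the RKHS is identified with the function x |-> h \<bullet> phi x.\<close>

definition cme_hilbert_schmidt :: "('h::real_inner \<Rightarrow> 'g::real_normed_vector) \<Rightarrow> bool" where
  "cme_hilbert_schmidt A \<longleftrightarrow> bounded_linear A \<and>
     (\<exists>E. (\<forall>e\<in>E. norm e = 1) \<and> (\<forall>e\<in>E. \<forall>e'\<in>E. e \<noteq> e' \<longrightarrow> e \<bullet> e' = 0) \<and>
          closure (span E) = UNIV \<and> (\<lambda>e. (norm (A e))\<^sup>2) summable_on E)"

text \<open>The Hilbert tensor product G (x) H, viewed (via Hilbert--Schmidt operators H -> G)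
  as the functions x |-> A (phi x).\<close>
definition cme_tensor :: "('x \<Rightarrow> 'h::real_inner) \<Rightarrow> ('x \<Rightarrow> 'g::real_normed_vector) set" where
  "cme_tensor \<phi> = {(\<lambda>x. A (\<phi> x)) | A. cme_hilbert_schmidt A}"

definition cme_rkhs_fun :: "('x \<Rightarrow> 'h::real_inner) \<Rightarrow> ('x \<Rightarrow> real) set" where
  "cme_rkhs_fun \<phi> = {(\<lambda>x. h \<bullet> \<phi> x) | h. True}"

definition cme_L2 :: "'x measure \<Rightarrow> ('x \<Rightarrow> 'k::{banach,second_countable_topology}) set" where
  "cme_L2 P = {f. f \<in> borel_measurable P \<and> integrable P (\<lambda>x. (norm (f x))\<^sup>2)}"

definition cme_mem :: "'x measure \<Rightarrow> ('x \<Rightarrow> 'k) set \<Rightarrow> ('x \<Rightarrow> 'k) \<Rightarrow> bool" where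
  "cme_mem P S f \<longleftrightarrow> (\<exists>u\<in>S. AE x in P. f x = u x)"

text \<open>Membership of [f] in S_C = S/(S \<inter> C) inside L2_C(P) (equality a.e. up to a constant).\<close>
definition cme_memC :: "'x measure \<Rightarrow> ('x \<Rightarrow> 'k::plus) set \<Rightarrow> ('x \<Rightarrow> 'k) \<Rightarrow> bool" where
  "cme_memC P S f \<longleftrightarrow> (\<exists>u\<in>S. \<exists>c. AE x in P. f x = u x + c)"

definition cme_closure :: "'x measure \<Rightarrow> ('x \<Rightarrow> 'k::real_normed_vector) set \<Rightarrow> ('x \<Rightarrow> 'k) \<Rightarrow> bool" where
  "cme_closure P S f \<longleftrightarrow>
     (\<forall>e::real>0. \<exists>u\<in>S. (\<integral>\<^sup>+x. ennreal ((norm (f x - u x))\<^sup>2) \<partial>P) < ennreal e)"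

text \<open>[f] lies in the closure of S_C in L2_C(P), with the norm
  ||[h]||^2 = E || h - E h ||^2.\<close>
definition cme_closureC :: "'x measure \<Rightarrow> ('x \<Rightarrow> 'k::{banach,second_countable_topology}) set \<Rightarrow> ('x \<Rightarrow> 'k) \<Rightarrow> bool" where
  "cme_closureC P S f \<longleftrightarrow>
     (\<forall>e::real>0. \<exists>u\<in>S.
        (\<integral>\<^sup>+x. ennreal ((norm ((f x - u x) - (\<integral>y. (f y - u y) \<partial>P)))\<^sup>2) \<partial>P) < ennreal e)"

definition cme_proj :: "'x measure \<Rightarrow> ('x \<Rightarrow> 'k::{real_inner,banach,second_countable_topology}) set
    \<Rightarrow> ('x \<Rightarrow> 'k) \<Rightarrow> ('x \<Rightarrow> 'k) \<Rightarrow> bool" where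
  "cme_proj P S f p \<longleftrightarrow> p \<in> cme_L2 P \<and> cme_closure P S p \<and>
     (\<forall>u\<in>S. (\<integral>x. (f x - p x) \<bullet> u x \<partial>P) = 0)"

text \<open>[p] is the orthogonal projection of [f] onto the closure of S_C in L2_C(P),
  with inner product <[f1],[f2]> = E <f1 - E f1, f2 - E f2>.\<close>
definition cme_projC :: "'x measure \<Rightarrow> ('x \<Rightarrow> 'k::{real_inner,banach,second_countable_topology}) set
    \<Rightarrow> ('x \<Rightarrow> 'k) \<Rightarrow> ('x \<Rightarrow> 'k) \<Rightarrow> bool" where
  "cme_projC P S f p \<longleftrightarrow> p \<in> cme_L2 P \<and> cme_closureC P S p \<and>
     (\<forall>u\<in>S. (\<integral>x. ((f x - p x) - (\<integral>y. (f y - p y) \<partial>P)) \<bullet> (u x - (\<integral>y. u y \<partial>P)) \<partial>P) = 0)"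

definition cme_cond_mean :: "'w measure \<Rightarrow> ('w \<Rightarrow> 'x) \<Rightarrow> 'x measure \<Rightarrow> ('w \<Rightarrow> 'g::{banach,second_countable_topology})
    \<Rightarrow> ('x \<Rightarrow> 'g) \<Rightarrow> bool" where
  "cme_cond_mean M X MX U m \<longleftrightarrow> m \<in> cme_L2 (distr M MX X) \<and>
     (\<forall>A\<in>sets MX. (\<integral>\<omega>. indicator A (X \<omega>) *\<^sub>R U \<omega> \<partial>M) = (\<integral>x. indicator A x *\<^sub>R m x \<partial>distr M MX X))"

text \<open>Centred cross-covariance operator C_AB = E[(A - mu_A) (x) (B - mu_B)], acting G -> H by
  b |-> E[<B - mu_B, b> (A - mu_A)].\<close>
definition cme_cov :: "'w measure \<Rightarrow> ('w \<Rightarrow> 'h::{banach,second_countable_topology}) \<Rightarrow> ('w \<Rightarrow> 'g::{real_inner,banach,second_countable_topology}) \<Rightarrow> 'g \<Rightarrow> 'h" where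
  "cme_cov M A B b = (\<integral>\<omega>. ((B \<omega> - (\<integral>\<omega>'. B \<omega>' \<partial>M)) \<bullet> b) *\<^sub>R (A \<omega> - (\<integral>\<omega>'. A \<omega>' \<partial>M)) \<partial>M)"

text \<open>Uncentred cross-covariance operator E[A (x) B], b |-> E[<B, b> A].\<close>
definition cme_ucov :: "'w measure \<Rightarrow> ('w \<Rightarrow> 'h::{banach,second_countable_topology}) \<Rightarrow> ('w \<Rightarrow> 'g::real_inner) \<Rightarrow> 'g \<Rightarrow> 'h" where
  "cme_ucov M A B b = (\<integral>\<omega>. (B \<omega> \<bullet> b) *\<^sub>R A \<omega> \<partial>M)"

end

theory Submission
  imports Defs
begin


lemma summable_banach_sqbound:
  fixes f :: "'a \<Rightarrow> 'b::banach" and g :: "'a \<Rightarrow> real"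
  assumes gs: "g summable_on A" and gnn: "\<And>x. x \<in> A \<Longrightarrow> g x \<ge> 0"
    and bnd: "\<And>D. finite D \<Longrightarrow> D \<subseteq> A \<Longrightarrow> (norm (sum f D))\<^sup>2 \<le> sum g D"
  shows "f summable_on A"
proof -
  from gs obtain L where lim: "(sum g \<longlongrightarrow> L) (finite_subsets_at_top A)"
    unfolding has_sum_def summable_on_def by blast
  have "\<exists>P. eventually P (finite_subsets_at_top A) \<and>
              (\<forall>F F'. P F \<and> P F' \<longrightarrow> dist (sum f F) (sum f F') < e)" if "e>0" for e
  proof -
    define d P where "d = e\<^sup>2/8" and "P F \<longleftrightarrow> finite F \<and> F \<subseteq> A \<and> dist (sum g F) L < d" for F
    then have "d > 0" using that by (simp add: d_def)
    have ev_P: "eventually P (finite_subsets_at_top A)"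
      using lim
      by (auto simp add: P_def[abs_def] \<open>0 < d\<close> eventually_conj_iff eventually_finite_subsets_at_top_weakI tendsto_iff)
    moreover have "dist (sum f F1) (sum f F2) < e" if "P F1" and "P F2" for F1 F2
    proof -
      from ev_P
      obtain F' where "finite F'" and "F' \<subseteq> A" and P_sup_F': "finite F \<and> F \<supseteq> F' \<and> F \<subseteq> A \<Longrightarrow> P F" for F
        by atomize_elim (simp add: eventually_finite_subsets_at_top)
      define F where "F = F' \<union> F1 \<union> F2"
      have "finite F" and "F \<subseteq> A"
        using F_def P_def[abs_def] that \<open>finite F'\<close> \<open>F' \<subseteq> A\<close> by auto
      have dist_F: "dist (sum g F) L < d"
        by (metis F_def \<open>F \<subseteq> A\<close> P_def P_sup_F' \<open>finite F\<close> le_supE order_refl)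
      have dist_F_subset: "dist (sum f F) (sum f F'') < e/2" if F'': "F'' \<subseteq> F" "P F''" for F''
      proof -
        have "dist (sum f F) (sum f F'') = norm (sum f (F-F''))"
          unfolding dist_norm using \<open>finite F\<close> F'' by (subst sum_diff) auto
        moreover have "(norm (sum f (F-F'')))\<^sup>2 \<le> sum g (F - F'')"
          using bnd \<open>finite F\<close> \<open>F \<subseteq> A\<close> by auto
        moreover have "sum g (F - F'') = sum g F - sum g F''"
          using \<open>finite F\<close> F'' by (subst sum_diff) auto
        moreover have "sum g F - sum g F'' < 2*d"
          using dist_F F'' unfolding P_def dist_real_def by linarith
        moreover have "2*d = (e/2)\<^sup>2" by (simp add: d_def power2_eq_square)
        ultimately have "(dist (sum f F) (sum f F''))\<^sup>2 < (e/2)\<^sup>2" by (metis (no_types) order_le_less_trans)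
        thus ?thesis using \<open>e > 0\<close> by (metis power2_less_imp_less less_eq_real_def half_gt_zero)
      qed
      have "dist (sum f F1) (sum f F2) \<le> dist (sum f F) (sum f F1) + dist (sum f F) (sum f F2)"
        by (rule dist_triangle3)
      also have "\<dots> < e/2 + e/2"
        by (intro add_strict_mono dist_F_subset that) (auto simp: F_def)
      finally show ?thesis by simp
    qed
    ultimately show ?thesis by blast
  qed
  then have "cauchy_filter (filtermap (sum f) (finite_subsets_at_top A))"
    by (simp add: cauchy_filter_metric_filtermap)
  moreover have "Topological_Spaces.complete (UNIV::'b set)"
    by (meson Cauchy_convergent UNIV_I complete_def convergent_def)
  ultimately obtain L' where "(sum f \<longlongrightarrow> L') (finite_subsets_at_top A)"
    using complete_uniform[where S=UNIV] by (force simp add: filterlim_def)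
  then show ?thesis
    using summable_on_def has_sum_def by blast
qed

definition orthonormal :: "'h::real_inner set \<Rightarrow> bool" where
  "orthonormal E \<longleftrightarrow> (\<forall>e\<in>E. norm e = 1) \<and> (\<forall>e\<in>E. \<forall>e'\<in>E. e \<noteq> e' \<longrightarrow> e \<bullet> e' = 0)"

lemma orth_norm_sum:
  fixes E :: "'h::real_inner set"
  assumes "orthonormal E" "finite D" "D \<subseteq> E"
  shows "(norm (\<Sum>e\<in>D. c e *\<^sub>R e))\<^sup>2 = (\<Sum>e\<in>D. (c e)\<^sup>2)"
proof -
  have "(norm (\<Sum>e\<in>D. c e *\<^sub>R e))\<^sup>2 = (\<Sum>e\<in>D. (norm (c e *\<^sub>R e))\<^sup>2)"
    apply (rule norm_sum_Pythagorean[OF assms(2)])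
    using assms unfolding orthonormal_def pairwise_def orthogonal_def by (auto simp: subset_iff)
  also have "\<dots> = (\<Sum>e\<in>D. (c e)\<^sup>2)"
    apply (rule sum.cong) using assms unfolding orthonormal_def by (auto simp: subset_iff)
  finally show ?thesis .
qed

lemma bessel:
  fixes E :: "'h::real_inner set"
  assumes "orthonormal E" "finite D" "D \<subseteq> E"
  shows "(\<Sum>e\<in>D. (h \<bullet> e)\<^sup>2) \<le> (norm h)\<^sup>2"
proof -
  define s where "s = (\<Sum>e\<in>D. (h \<bullet> e) *\<^sub>R e)"
  have ns: "(norm s)\<^sup>2 = (\<Sum>e\<in>D. (h \<bullet> e)\<^sup>2)" unfolding s_def by (rule orth_norm_sum[OF assms])
  have hs: "h \<bullet> s = (\<Sum>e\<in>D. (h \<bullet> e)\<^sup>2)" unfolding s_def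
    by (simp add: inner_sum_right power2_eq_square)
  have "0 \<le> (norm (h - s))\<^sup>2" by simp
  also have "\<dots> = (norm h)\<^sup>2 - 2 * (h \<bullet> s) + (norm s)\<^sup>2"
    by (simp add: power2_norm_eq_inner inner_diff_left inner_diff_right inner_commute)
  finally show ?thesis using ns hs by simp
qed


lemma hs_basis:
  assumes "cme_hilbert_schmidt (A::'h::real_inner \<Rightarrow> 'g::real_normed_vector)"
  obtains E where "orthonormal E" "closure (span E) = UNIV" "(\<lambda>e. (norm (A e))\<^sup>2) summable_on E"
    "bounded_linear A"
proof -
  from assms obtain E where "bounded_linear A" "\<forall>e\<in>E. norm e = 1" "\<forall>e\<in>E. \<forall>e'\<in>E. e \<noteq> e' \<longrightarrow> e \<bullet> e' = 0"
          "closure (span E) = UNIV" "(\<lambda>e. (norm (A e))\<^sup>2) summable_on E"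
    unfolding cme_hilbert_schmidt_def by auto
  then show ?thesis using that unfolding orthonormal_def by simp
qed

lemma hs_adjoint:
  fixes A :: "'h::{real_inner,banach} \<Rightarrow> 'g::real_inner"
  assumes "cme_hilbert_schmidt A"
  shows "\<exists>h. \<forall>y. g \<bullet> A y = h \<bullet> y"
proof -
  obtain E where E: "orthonormal E" "closure (span E) = UNIV" "(\<lambda>e. (norm (A e))\<^sup>2) summable_on E"
    and bl: "bounded_linear A" using hs_basis[OF assms] by blast
  define c where "c e = g \<bullet> A e" for e
  have cs: "(\<lambda>e. (c e)\<^sup>2) summable_on E"
  proof (rule summable_on_comparison_test)
    show "(\<lambda>e. (norm g)\<^sup>2 * (norm (A e))\<^sup>2) summable_on E"
      using E(3) by (rule summable_on_cmult_right)
    show "(c e)\<^sup>2 \<le> (norm g)\<^sup>2 * (norm (A e))\<^sup>2" for e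
    proof -
      have "\<bar>c e\<bar> \<le> norm g * norm (A e)" unfolding c_def by (rule Cauchy_Schwarz_ineq2)
      hence "\<bar>c e\<bar>\<^sup>2 \<le> (norm g * norm (A e))\<^sup>2" by (rule power_mono) simp
      thus ?thesis by (simp add: power_mult_distrib)
    qed
  qed simp
  have fs: "(\<lambda>e. c e *\<^sub>R e) summable_on E"
    by (rule summable_banach_sqbound[OF cs]) (simp_all add: orth_norm_sum[OF E(1)])
  define h where "h = infsum (\<lambda>e. c e *\<^sub>R e) E"
  have hs: "((\<lambda>e. c e *\<^sub>R e) has_sum h) E" unfolding h_def using fs by simp
  have ee: "e \<bullet> e = 1" if "e \<in> E" for e
    using E(1) that unfolding orthonormal_def by (metis power2_norm_eq_inner one_power2)
  have he: "h \<bullet> e' = g \<bullet> A e'" if "e' \<in> E" for e'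
  proof -
    have "((\<lambda>e. (c e *\<^sub>R e) \<bullet> e') has_sum (h \<bullet> e')) E"
      by (rule has_sum_bounded_linear[OF bounded_linear_inner_left hs])
    moreover have "((\<lambda>e. (c e *\<^sub>R e) \<bullet> e') has_sum c e') E"
    proof -
      have "((\<lambda>e. (c e *\<^sub>R e) \<bullet> e') has_sum c e') E \<longleftrightarrow> ((\<lambda>e. (c e *\<^sub>R e) \<bullet> e') has_sum c e') {e'}"
        apply (rule has_sum_cong_neutral)
        using E(1) that unfolding orthonormal_def by (auto simp: inner_commute)
      moreover have "((\<lambda>e. (c e *\<^sub>R e) \<bullet> e') has_sum c e') {e'}"
        using ee[OF that] by (intro has_sum_finiteI) simp_all
      ultimately show ?thesis by blast
    qed
    ultimately show ?thesis unfolding c_def using has_sum_unique by blast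
  qed
  interpret A: bounded_linear A by (rule bl)
  have sub: "span E \<subseteq> {y. g \<bullet> A y = h \<bullet> y}"
  proof (rule span_minimal)
    show "E \<subseteq> {y. g \<bullet> A y = h \<bullet> y}" using he by (auto simp: inner_commute)
    show "subspace {y. g \<bullet> A y = h \<bullet> y}"
    proof -
      have "g \<bullet> A (x + y) = h \<bullet> (x + y)" if "g \<bullet> A x = h \<bullet> x" "g \<bullet> A y = h \<bullet> y" for x y
        using that by (simp add: A.add inner_add_right)
      moreover have "g \<bullet> A (c *\<^sub>R x) = h \<bullet> (c *\<^sub>R x)" if "g \<bullet> A x = h \<bullet> x" for c x
        using that by (simp add: A.scale)
      ultimately show ?thesis unfolding subspace_def by (simp add: A.zero)
    qed
  qed
  have c1: "continuous_on UNIV (\<lambda>y. g \<bullet> A y)"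
    by (rule continuous_on_inner[OF continuous_on_const A.continuous_on[OF continuous_on_id]])
  have c2: "continuous_on UNIV (\<lambda>y. h \<bullet> y)"
    by (rule continuous_on_inner[OF continuous_on_const continuous_on_id])
  have cl: "closed {y. g \<bullet> A y = h \<bullet> y}"
    by (rule closed_Collect_eq[OF c1 c2])
  have "closure (span E) \<subseteq> {y. g \<bullet> A y = h \<bullet> y}"
    by (rule closure_minimal[OF sub cl])
  thus ?thesis using E(2) by auto
qed

lemma hs_rank_one:
  fixes A :: "'h::{real_inner,banach} \<Rightarrow> 'g::real_inner" and h :: 'h
  assumes "cme_hilbert_schmidt A"
  shows "cme_hilbert_schmidt (\<lambda>y. (h \<bullet> y) *\<^sub>R (g::'k::real_inner))"
proof -
  obtain E where E: "orthonormal E" "closure (span E) = UNIV"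
    and "(\<lambda>e. (norm (A e))\<^sup>2) summable_on E" "bounded_linear A"
    by (rule hs_basis[OF assms])
  have bd: "x \<le> (norm h)\<^sup>2" if "x \<in> sum (\<lambda>e. (h \<bullet> e)\<^sup>2) ` {F. F \<subseteq> E \<and> finite F}" for x
  proof -
    from that obtain F where "F \<subseteq> E" "finite F" "x = sum (\<lambda>e. (h \<bullet> e)\<^sup>2) F" by blast
    thus ?thesis using bessel[OF E(1), of F h] by simp
  qed
  have "(\<lambda>e. (h \<bullet> e)\<^sup>2) summable_on E"
    by (rule nonneg_bdd_above_summable_on[OF _ bdd_aboveI[OF bd]]) simp_all
  hence "(\<lambda>e. (norm g)\<^sup>2 * (h \<bullet> e)\<^sup>2) summable_on E" by (rule summable_on_cmult_right)
  hence s: "(\<lambda>e. (norm ((h \<bullet> e) *\<^sub>R g))\<^sup>2) summable_on E"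
    by (simp add: power_mult_distrib mult.commute)
  have bl: "bounded_linear (\<lambda>y. (h \<bullet> y) *\<^sub>R g)"
    by (rule bounded_linear_compose[OF bounded_linear_scaleR_left bounded_linear_inner_right])
  have o1: "\<forall>e\<in>E. norm e = 1" and o2: "\<forall>e\<in>E. \<forall>e'\<in>E. e \<noteq> e' \<longrightarrow> e \<bullet> e' = 0"
    using E(1) unfolding orthonormal_def by auto
  show ?thesis unfolding cme_hilbert_schmidt_def
    apply (rule conjI[OF bl]) apply (rule exI[of _ E]) using o1 o2 E(2) s by (intro conjI)
qed



lemma L2_integrable:
  fixes f :: "'x \<Rightarrow> 'k::{banach,second_countable_topology}"
  assumes "prob_space P" "f \<in> cme_L2 P"
  shows "integrable P f"
proof -
  interpret prob_space P by fact
  have m: "f \<in> borel_measurable P" and i: "integrable P (\<lambda>x. (norm (f x))\<^sup>2)"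
    using assms(2) unfolding cme_L2_def by auto
  have I: "integrable P (\<lambda>x. 1 + (norm (f x))\<^sup>2)" using i by simp
  have B: "norm (f x) \<le> norm (1 + (norm (f x))\<^sup>2)" for x
  proof -
    have "2 * norm (f x) * 1 \<le> (norm (f x))\<^sup>2 + 1\<^sup>2" by (rule sum_squares_bound)
    hence "norm (f x) \<le> 1 + (norm (f x))\<^sup>2" using norm_ge_zero[of "f x"] by (simp only: power_one mult_1_right)
    thus ?thesis by simp
  qed
  show ?thesis by (rule Bochner_Integration.integrable_bound[OF I m AE_I2[OF B]])
qed

lemma L2_prod_bound:
  fixes a b :: real
  shows "\<bar>a * b\<bar> \<le> a\<^sup>2 + b\<^sup>2"
proof -
  have "2 * \<bar>a\<bar> * \<bar>b\<bar> \<le> \<bar>a\<bar>\<^sup>2 + \<bar>b\<bar>\<^sup>2" by (rule sum_squares_bound)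
  moreover have "\<bar>a * b\<bar> \<le> 2 * \<bar>a\<bar> * \<bar>b\<bar>" by (simp add: abs_mult)
  ultimately show ?thesis by simp
qed

lemma L2_inner_integrable:
  fixes f g :: "'x \<Rightarrow> 'k::{real_inner,banach,second_countable_topology}"
  assumes "f \<in> cme_L2 P" "g \<in> cme_L2 P"
  shows "integrable P (\<lambda>x. f x \<bullet> g x)"
proof -
  have m: "f \<in> borel_measurable P" "g \<in> borel_measurable P"
    and i: "integrable P (\<lambda>x. (norm (f x))\<^sup>2)" "integrable P (\<lambda>x. (norm (g x))\<^sup>2)"
    using assms unfolding cme_L2_def by auto
  have I: "integrable P (\<lambda>x. (norm (f x))\<^sup>2 + (norm (g x))\<^sup>2)" using i by simp
  have B: "norm (f x \<bullet> g x) \<le> norm ((norm (f x))\<^sup>2 + (norm (g x))\<^sup>2)" for x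
  proof -
    have "\<bar>f x \<bullet> g x\<bar> \<le> norm (f x) * norm (g x)" by (rule Cauchy_Schwarz_ineq2)
    also have "\<dots> \<le> (norm (f x))\<^sup>2 + (norm (g x))\<^sup>2" using L2_prod_bound[of "norm (f x)" "norm (g x)"] by simp
    finally show ?thesis by simp
  qed
  have Mm: "(\<lambda>x. f x \<bullet> g x) \<in> borel_measurable P" using m by simp
  show ?thesis by (rule Bochner_Integration.integrable_bound[OF I Mm AE_I2[OF B]])
qed

lemma L2_scaleR_integrable:
  fixes f :: "'x \<Rightarrow> 'k::{real_inner,banach,second_countable_topology}" and a :: "'x \<Rightarrow> real"
  assumes "a \<in> cme_L2 P" "f \<in> cme_L2 P"
  shows "integrable P (\<lambda>x. a x *\<^sub>R f x)"
proof -
  have m: "f \<in> borel_measurable P" "a \<in> borel_measurable P"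
    and i: "integrable P (\<lambda>x. (norm (f x))\<^sup>2)" "integrable P (\<lambda>x. (norm (a x))\<^sup>2)"
    using assms unfolding cme_L2_def by auto
  have I: "integrable P (\<lambda>x. (norm (a x))\<^sup>2 + (norm (f x))\<^sup>2)" using i by simp
  have B: "norm (a x *\<^sub>R f x) \<le> norm ((norm (a x))\<^sup>2 + (norm (f x))\<^sup>2)" for x
  proof -
    have "norm (a x *\<^sub>R f x) = norm (a x) * norm (f x)" by simp
    also have "\<dots> \<le> (norm (a x))\<^sup>2 + (norm (f x))\<^sup>2" using L2_prod_bound[of "norm (a x)" "norm (f x)"] by simp
    finally show ?thesis by simp
  qed
  have Mm: "(\<lambda>x. a x *\<^sub>R f x) \<in> borel_measurable P" using m by simp
  show ?thesis by (rule Bochner_Integration.integrable_bound[OF I Mm AE_I2[OF B]])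
qed

lemma L2_bounded_linear:
  fixes f :: "'x \<Rightarrow> 'k::{banach,second_countable_topology}" and T :: "'k \<Rightarrow> 'j::{banach,second_countable_topology}"
  assumes "bounded_linear T" "f \<in> cme_L2 P"
  shows "(\<lambda>x. T (f x)) \<in> cme_L2 P"
proof -
  interpret T: bounded_linear T by fact
  have m: "f \<in> borel_measurable P" and i: "integrable P (\<lambda>x. (norm (f x))\<^sup>2)"
    using assms unfolding cme_L2_def by auto
  obtain K where K: "\<And>x. norm (T x) \<le> norm x * K" "K > 0" using T.pos_bounded by blast
  have cT: "continuous_on UNIV T" by (rule T.continuous_on[OF continuous_on_id])
  have mT: "(\<lambda>x. T (f x)) \<in> borel_measurable P"
    by (rule measurable_compose[OF m borel_measurable_continuous_onI[OF cT]])
  have I: "integrable P (\<lambda>x. K\<^sup>2 * (norm (f x))\<^sup>2)" using i by simp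
  have B: "norm ((norm (T (f x)))\<^sup>2) \<le> norm (K\<^sup>2 * (norm (f x))\<^sup>2)" for x
  proof -
    have "norm (T (f x)) \<le> norm (f x) * K" by (rule K(1))
    hence "(norm (T (f x)))\<^sup>2 \<le> (norm (f x) * K)\<^sup>2" by (rule power_mono) simp
    thus ?thesis by (simp add: power_mult_distrib mult.commute)
  qed
  have Mm: "(\<lambda>x. (norm (T (f x)))\<^sup>2) \<in> borel_measurable P" using mT by simp
  have "integrable P (\<lambda>x. (norm (T (f x)))\<^sup>2)"
    by (rule Bochner_Integration.integrable_bound[OF I Mm AE_I2[OF B]])
  thus ?thesis using mT unfolding cme_L2_def by auto
qed

lemma L2_diff:
  fixes f g :: "'x \<Rightarrow> 'k::{banach,second_countable_topology}"
  assumes "f \<in> cme_L2 P" "g \<in> cme_L2 P"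
  shows "(\<lambda>x. f x - g x) \<in> cme_L2 P"
proof -
  have m: "f \<in> borel_measurable P" "g \<in> borel_measurable P"
    and i: "integrable P (\<lambda>x. (norm (f x))\<^sup>2)" "integrable P (\<lambda>x. (norm (g x))\<^sup>2)"
    using assms unfolding cme_L2_def by auto
  have md: "(\<lambda>x. f x - g x) \<in> borel_measurable P" using m by simp
  have I: "integrable P (\<lambda>x. 2 * (norm (f x))\<^sup>2 + 2 * (norm (g x))\<^sup>2)" using i by simp
  have B: "norm ((norm (f x - g x))\<^sup>2) \<le> norm (2 * (norm (f x))\<^sup>2 + 2 * (norm (g x))\<^sup>2)" for x
  proof -
    have "norm (f x - g x) \<le> norm (f x) + norm (g x)" by (rule norm_triangle_ineq4)
    hence "(norm (f x - g x))\<^sup>2 \<le> (norm (f x) + norm (g x))\<^sup>2" by (rule power_mono) simp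
    also have "\<dots> \<le> 2 * (norm (f x))\<^sup>2 + 2 * (norm (g x))\<^sup>2"
      using sum_squares_bound[of "norm (f x)" "norm (g x)"] by (simp add: power2_sum)
    finally show ?thesis by simp
  qed
  have Mm: "(\<lambda>x. (norm (f x - g x))\<^sup>2) \<in> borel_measurable P" using md by simp
  have "integrable P (\<lambda>x. (norm (f x - g x))\<^sup>2)"
    by (rule Bochner_Integration.integrable_bound[OF I Mm AE_I2[OF B]])
  thus ?thesis using md unfolding cme_L2_def by auto
qed

lemma L2_const:
  assumes "prob_space P"
  shows "(\<lambda>x. c::'k::{banach,second_countable_topology}) \<in> cme_L2 P"
proof -
  interpret prob_space P by fact
  show ?thesis unfolding cme_L2_def by simp
qed


lemma ce_extend:
  fixes d :: "'w \<Rightarrow> real" and f :: "'x \<Rightarrow> real"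
  assumes X: "X \<in> M \<rightarrow>\<^sub>M MX" and d: "integrable M d"
    and ind: "\<And>A. A \<in> sets MX \<Longrightarrow> (\<integral>\<omega>. indicator A (X \<omega>) * d \<omega> \<partial>M) = 0"
    and fm: "f \<in> borel_measurable MX" and fi: "integrable M (\<lambda>\<omega>. f (X \<omega>) * d \<omega>)"
  shows "(\<integral>\<omega>. f (X \<omega>) * d \<omega> \<partial>M) = 0"
proof -
  obtain F where F: "\<And>i. simple_function MX (F i)" "\<And>x. x\<in>space MX \<Longrightarrow> (\<lambda>i. F i x) \<longlonglongrightarrow> f x"
    "\<And>i x. x\<in>space MX \<Longrightarrow> dist (F i x) 0 \<le> 2 * dist (f x) 0"
    using borel_measurable_implies_sequence_metric[OF fm, of 0] by blast
  have dm: "d \<in> borel_measurable M" using d by simp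
  have indi: "integrable M (\<lambda>\<omega>. indicator A (X \<omega>) * d \<omega>)" if A: "A \<in> sets MX" for A
  proof -
    have Mm: "(\<lambda>\<omega>. indicator A (X \<omega>) * d \<omega>) \<in> borel_measurable M"
      by (rule borel_measurable_times[OF measurable_compose[OF X borel_measurable_indicator[OF A]] dm])
    have B: "norm (indicator A (X \<omega>) * d \<omega>) \<le> norm (d \<omega>)" for \<omega>
      by (simp add: indicator_def)
    show ?thesis by (rule Bochner_Integration.integrable_bound[OF d Mm AE_I2[OF B]])
  qed
  have zero: "(\<integral>\<omega>. F i (X \<omega>) * d \<omega> \<partial>M) = 0" for i
  proof -
    define S where "S = F i ` space MX"
    have fin: "finite S" using F(1)[of i] unfolding simple_function_def S_def by simp
    have setsy: "F i -` {y} \<inter> space MX \<in> sets MX" for y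
      by (rule simple_functionD(2)[OF F(1)])
    have rep: "F i (X \<omega>) * d \<omega> = (\<Sum>y\<in>S. y * (indicator (F i -` {y} \<inter> space MX) (X \<omega>) * d \<omega>))"
      if "\<omega> \<in> space M" for \<omega>
    proof -
      have "F i (X \<omega>) = (\<Sum>y\<in>S. indicator (F i -` {y} \<inter> space MX) (X \<omega>) *\<^sub>R y)"
        unfolding S_def
        by (rule simple_function_indicator_representation_banach[OF F(1) measurable_space[OF X that]])
      hence "F i (X \<omega>) * d \<omega> = (\<Sum>y\<in>S. (indicator (F i -` {y} \<inter> space MX) (X \<omega>) *\<^sub>R y) * d \<omega>)"
        by (simp only: sum_distrib_right)
      also have "\<dots> = (\<Sum>y\<in>S. y * (indicator (F i -` {y} \<inter> space MX) (X \<omega>) * d \<omega>))"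
        by (intro sum.cong refl) (simp add: mult_ac)
      finally show ?thesis .
    qed
    have "(\<integral>\<omega>. F i (X \<omega>) * d \<omega> \<partial>M) = (\<integral>\<omega>. (\<Sum>y\<in>S. y * (indicator (F i -` {y} \<inter> space MX) (X \<omega>) * d \<omega>)) \<partial>M)"
      by (rule Bochner_Integration.integral_cong[OF refl rep])
    also have "\<dots> = (\<Sum>y\<in>S. (\<integral>\<omega>. y * (indicator (F i -` {y} \<inter> space MX) (X \<omega>) * d \<omega>) \<partial>M))"
      by (rule Bochner_Integration.integral_sum[where f="\<lambda>y \<omega>. y * (indicator (F i -` {y} \<inter> space MX) (X \<omega>) * d \<omega>)"],
          rule integrable_mult_right, rule indi[OF setsy])
    also have "\<dots> = 0"
      by (simp add: ind setsy)
    finally show ?thesis .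
  qed
  have lim: "(\<lambda>i. \<integral>\<omega>. F i (X \<omega>) * d \<omega> \<partial>M) \<longlonglongrightarrow> (\<integral>\<omega>. f (X \<omega>) * d \<omega> \<partial>M)"
  proof (rule integral_dominated_convergence[where w="\<lambda>\<omega>. 2 * \<bar>f (X \<omega>) * d \<omega>\<bar>"])
    show "(\<lambda>\<omega>. f (X \<omega>) * d \<omega>) \<in> borel_measurable M" using fi by simp
    show "(\<lambda>\<omega>. F i (X \<omega>) * d \<omega>) \<in> borel_measurable M" for i
      by (rule borel_measurable_times[OF measurable_compose[OF X borel_measurable_simple_function[OF F(1)]] dm])
    show "integrable M (\<lambda>\<omega>. 2 * \<bar>f (X \<omega>) * d \<omega>\<bar>)" using fi by simp
    show "AE \<omega> in M. (\<lambda>i. F i (X \<omega>) * d \<omega>) \<longlonglongrightarrow> f (X \<omega>) * d \<omega>"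
      by (rule AE_I2, rule tendsto_mult_right, rule F(2), rule measurable_space[OF X])
    show "AE \<omega> in M. norm (F i (X \<omega>) * d \<omega>) \<le> 2 * \<bar>f (X \<omega>) * d \<omega>\<bar>" for i
    proof (rule AE_I2)
      fix \<omega> assume "\<omega> \<in> space M"
      hence "\<bar>F i (X \<omega>)\<bar> \<le> 2 * \<bar>f (X \<omega>)\<bar>" using F(3)[of "X \<omega>" i] measurable_space[OF X] by (simp add: dist_real_def)
      hence "\<bar>F i (X \<omega>)\<bar> * \<bar>d \<omega>\<bar> \<le> 2 * \<bar>f (X \<omega>)\<bar> * \<bar>d \<omega>\<bar>" by (rule mult_right_mono) simp
      thus "norm (F i (X \<omega>) * d \<omega>) \<le> 2 * \<bar>f (X \<omega>) * d \<omega>\<bar>" by (simp add: abs_mult)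
    qed
  qed
  from lim show ?thesis unfolding zero by (simp add: LIMSEQ_const_iff)
qed



lemma tensor_bl:
  assumes "u \<in> cme_tensor (\<phi> :: 'x \<Rightarrow> 'h::{real_inner,banach})"
  obtains A where "cme_hilbert_schmidt A" "bounded_linear A" "u = (\<lambda>x. A (\<phi> x))"
proof -
  from assms obtain A where A: "cme_hilbert_schmidt A" "u = (\<lambda>x. A (\<phi> x))"
    unfolding cme_tensor_def by auto
  moreover have "bounded_linear A" using A(1) unfolding cme_hilbert_schmidt_def by simp
  ultimately show ?thesis using that by simp
qed

lemma tensor_adj:
  fixes \<phi> :: "'x \<Rightarrow> 'h::{real_inner,banach}" and u :: "'x \<Rightarrow> 'g::real_inner"
  assumes "u \<in> cme_tensor \<phi>"
  shows "\<exists>h. \<forall>x. g \<bullet> u x = h \<bullet> \<phi> x"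
proof -
  obtain A where A: "cme_hilbert_schmidt A" "u = (\<lambda>x. A (\<phi> x))" by (rule tensor_bl[OF assms])
  obtain h where "\<forall>y. g \<bullet> A y = h \<bullet> y" using hs_adjoint[OF A(1)] by blast
  thus ?thesis using A(2) by auto
qed

lemma tensor_rank1:
  fixes \<phi> :: "'x \<Rightarrow> 'h::{real_inner,banach}" and u :: "'x \<Rightarrow> 'g::real_inner" and g :: 'g
  assumes "u \<in> cme_tensor \<phi>"
  shows "(\<lambda>x. (h \<bullet> \<phi> x) *\<^sub>R g) \<in> cme_tensor \<phi>"
proof -
  obtain A where A: "cme_hilbert_schmidt A" "u = (\<lambda>x. A (\<phi> x))" by (rule tensor_bl[OF assms])
  have "cme_hilbert_schmidt (\<lambda>y. (h \<bullet> y) *\<^sub>R g)" by (rule hs_rank_one[OF A(1)])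
  thus ?thesis unfolding cme_tensor_def by auto
qed

lemma tensor_meas:
  fixes \<phi> :: "'x \<Rightarrow> 'h::{real_inner,banach}" and u :: "'x \<Rightarrow> 'g::{real_normed_vector}"
  assumes "u \<in> cme_tensor \<phi>" "\<phi> \<in> borel_measurable P"
  shows "u \<in> borel_measurable P"
proof -
  obtain A where A: "bounded_linear A" "u = (\<lambda>x. A (\<phi> x))" by (rule tensor_bl[OF assms(1)])
  interpret A: bounded_linear A by (rule A(1))
  have cT: "continuous_on UNIV A" by (rule A.continuous_on[OF continuous_on_id])
  show ?thesis unfolding A(2)
    by (rule measurable_compose[OF assms(2) borel_measurable_continuous_onI[OF cT]])
qed

lemma rkhs_mem: "(\<lambda>x. h \<bullet> \<phi> x) \<in> cme_rkhs_fun \<phi>"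
  unfolding cme_rkhs_fun_def by blast

lemma part_mem:
  fixes \<phi> :: "'x \<Rightarrow> 'h::{real_inner,banach}" and f :: "'x \<Rightarrow> 'g::real_inner"
  assumes "cme_mem P (cme_tensor \<phi>) f"
  shows "cme_mem P (cme_rkhs_fun \<phi>) (\<lambda>x. g \<bullet> f x)"
proof -
  obtain u where u: "u \<in> cme_tensor \<phi>" "AE x in P. f x = u x" using assms unfolding cme_mem_def by blast
  obtain h where h: "\<forall>x. g \<bullet> u x = h \<bullet> \<phi> x" using tensor_adj[OF u(1)] by blast
  have "AE x in P. g \<bullet> f x = h \<bullet> \<phi> x" using u(2) by (rule eventually_mono) (simp add: h)
  thus ?thesis unfolding cme_mem_def by (intro bexI[OF _ rkhs_mem[of h \<phi>]]) simp
qed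

lemma part_memC:
  fixes \<phi> :: "'x \<Rightarrow> 'h::{real_inner,banach}" and f :: "'x \<Rightarrow> 'g::real_inner"
  assumes "cme_memC P (cme_tensor \<phi>) f"
  shows "cme_memC P (cme_rkhs_fun \<phi>) (\<lambda>x. g \<bullet> f x)"
proof -
  obtain u c where u: "u \<in> cme_tensor \<phi>" "AE x in P. f x = u x + c" using assms unfolding cme_memC_def by blast
  obtain h where h: "\<forall>x. g \<bullet> u x = h \<bullet> \<phi> x" using tensor_adj[OF u(1)] by blast
  have "AE x in P. g \<bullet> f x = h \<bullet> \<phi> x + g \<bullet> c" using u(2) by (rule eventually_mono) (simp add: h inner_add_right)
  thus ?thesis unfolding cme_memC_def by (intro bexI[OF _ rkhs_mem[of h \<phi>]] exI[of _ "g \<bullet> c"]) simp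
qed

lemma sq_inner_bound:
  fixes g w :: "'a::real_inner"
  shows "(g \<bullet> w)\<^sup>2 \<le> ((norm g)\<^sup>2 + 1) * (norm w)\<^sup>2"
proof -
  have "\<bar>g \<bullet> w\<bar> \<le> norm g * norm w" by (rule Cauchy_Schwarz_ineq2)
  hence "\<bar>g \<bullet> w\<bar>\<^sup>2 \<le> (norm g * norm w)\<^sup>2" by (rule power_mono) simp
  also have "\<dots> \<le> ((norm g)\<^sup>2 + 1) * (norm w)\<^sup>2" by (simp add: power_mult_distrib algebra_simps)
  finally show ?thesis by simp
qed

lemma ennreal_scale_lt:
  assumes "I < ennreal (e / K)" "K > 0" "e > 0"
  shows "ennreal K * I < ennreal e"
proof -
  have "ennreal K * I < ennreal K * ennreal (e / K)"
    by (rule ennreal_mult_strict_left_mono[OF assms(1)]) (use assms(2) in auto)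
  also have "\<dots> = ennreal e" using assms by (simp add: ennreal_mult[symmetric])
  finally show ?thesis .
qed

lemma part_closure:
  fixes \<phi> :: "'x \<Rightarrow> 'h::{real_inner,banach}" and f :: "'x \<Rightarrow> 'g::{real_inner,banach,second_countable_topology}"
  assumes "cme_closure P (cme_tensor \<phi>) f" and fm: "f \<in> borel_measurable P" and pm: "\<phi> \<in> borel_measurable P"
  shows "cme_closure P (cme_rkhs_fun \<phi>) (\<lambda>x. g \<bullet> f x)"
  unfolding cme_closure_def
proof (intro allI impI)
  fix e :: real assume e: "e > 0"
  define K where "K = (norm g)\<^sup>2 + 1"
  have K: "K > 0" unfolding K_def by (simp add: add_nonneg_pos)
  obtain u where u: "u \<in> cme_tensor \<phi>" "(\<integral>\<^sup>+x. ennreal ((norm (f x - u x))\<^sup>2) \<partial>P) < ennreal (e / K)"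
    using assms e K unfolding cme_closure_def by (meson divide_pos_pos)
  obtain h where h: "\<forall>x. g \<bullet> u x = h \<bullet> \<phi> x" using tensor_adj[OF u(1)] by blast
  have "(\<integral>\<^sup>+x. ennreal ((norm (g \<bullet> f x - h \<bullet> \<phi> x))\<^sup>2) \<partial>P)
      \<le> (\<integral>\<^sup>+x. ennreal K * ennreal ((norm (f x - u x))\<^sup>2) \<partial>P)"
  proof (rule nn_integral_mono)
    fix x
    have "g \<bullet> f x - h \<bullet> \<phi> x = g \<bullet> (f x - u x)" by (simp add: h inner_diff_right)
    hence "(norm (g \<bullet> f x - h \<bullet> \<phi> x))\<^sup>2 \<le> K * (norm (f x - u x))\<^sup>2"
      using sq_inner_bound[of g "f x - u x"] unfolding K_def by simp
    thus "ennreal ((norm (g \<bullet> f x - h \<bullet> \<phi> x))\<^sup>2) \<le> ennreal K * ennreal ((norm (f x - u x))\<^sup>2)"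
      using K by (simp add: ennreal_mult[symmetric])
  qed
  also have "\<dots> \<le> ennreal K * (\<integral>\<^sup>+x. ennreal ((norm (f x - u x))\<^sup>2) \<partial>P)"
  proof (rule order.eq_iff[THEN iffD1, THEN conjunct1], rule nn_integral_cmult)
    have [measurable]: "u \<in> borel_measurable P" by (rule tensor_meas[OF u(1) pm])
    note fm[measurable]
    show "(\<lambda>x. ennreal ((norm (f x - u x))\<^sup>2)) \<in> borel_measurable P" by measurable
  qed
  also have "\<dots> < ennreal e" by (rule ennreal_scale_lt[OF u(2) K e])
  finally show "\<exists>v\<in>cme_rkhs_fun \<phi>. (\<integral>\<^sup>+x. ennreal ((norm (g \<bullet> f x - v x))\<^sup>2) \<partial>P) < ennreal e"
    by (intro bexI[OF _ rkhs_mem[of h \<phi>]]) simp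
qed


lemma tensor_int:
  fixes \<phi> :: "'x \<Rightarrow> 'h::{real_inner,banach,second_countable_topology}"
    and u :: "'x \<Rightarrow> 'g::{real_inner,banach,second_countable_topology}"
  assumes "u \<in> cme_tensor \<phi>" "integrable P \<phi>"
  shows "integrable P u"
proof -
  obtain A where A: "bounded_linear A" "u = (\<lambda>x. A (\<phi> x))" by (rule tensor_bl[OF assms(1)])
  show ?thesis unfolding A(2) by (rule integrable_bounded_linear[OF A(1) assms(2)])
qed

lemma part_closureC:
  fixes \<phi> :: "'x \<Rightarrow> 'h::{real_inner,banach,second_countable_topology}"
    and f :: "'x \<Rightarrow> 'g::{real_inner,banach,second_countable_topology}"
  assumes "cme_closureC P (cme_tensor \<phi>) f" and fi: "integrable P f" and pi: "integrable P \<phi>"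
  shows "cme_closureC P (cme_rkhs_fun \<phi>) (\<lambda>x. g \<bullet> f x)"
  unfolding cme_closureC_def
proof (intro allI impI)
  fix e :: real assume e: "e > 0"
  define K where "K = (norm g)\<^sup>2 + 1"
  have K: "K > 0" unfolding K_def by (simp add: add_nonneg_pos)
  obtain u where u: "u \<in> cme_tensor \<phi>"
    "(\<integral>\<^sup>+x. ennreal ((norm ((f x - u x) - (\<integral>y. (f y - u y) \<partial>P)))\<^sup>2) \<partial>P) < ennreal (e / K)"
    using assms e K unfolding cme_closureC_def by (meson divide_pos_pos)
  obtain h where h: "\<forall>x. g \<bullet> u x = h \<bullet> \<phi> x" using tensor_adj[OF u(1)] by blast
  have ui: "integrable P u" by (rule tensor_int[OF u(1) pi])
  have fui: "integrable P (\<lambda>y. f y - u y)" using fi ui by simp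
  define C where "C = (\<integral>y. (f y - u y) \<partial>P)"
  have IC: "(\<integral>y. (g \<bullet> f y - h \<bullet> \<phi> y) \<partial>P) = g \<bullet> C"
  proof -
    have "(\<integral>y. (g \<bullet> f y - h \<bullet> \<phi> y) \<partial>P) = (\<integral>y. g \<bullet> (f y - u y) \<partial>P)"
      by (rule Bochner_Integration.integral_cong) (simp_all add: h inner_diff_right)
    also have "\<dots> = g \<bullet> C" unfolding C_def using fui by simp
    finally show ?thesis .
  qed
  have "(\<integral>\<^sup>+x. ennreal ((norm ((g \<bullet> f x - h \<bullet> \<phi> x) - (\<integral>y. (g \<bullet> f y - h \<bullet> \<phi> y) \<partial>P)))\<^sup>2) \<partial>P)
      \<le> (\<integral>\<^sup>+x. ennreal K * ennreal ((norm ((f x - u x) - C))\<^sup>2) \<partial>P)"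
  proof (rule nn_integral_mono)
    fix x
    have "(g \<bullet> f x - h \<bullet> \<phi> x) - (\<integral>y. (g \<bullet> f y - h \<bullet> \<phi> y) \<partial>P) = g \<bullet> ((f x - u x) - C)"
      unfolding IC by (simp add: h inner_diff_right)
    hence "(norm ((g \<bullet> f x - h \<bullet> \<phi> x) - (\<integral>y. (g \<bullet> f y - h \<bullet> \<phi> y) \<partial>P)))\<^sup>2 \<le> K * (norm ((f x - u x) - C))\<^sup>2"
      using sq_inner_bound[of g "(f x - u x) - C"] unfolding K_def by simp
    thus "ennreal ((norm ((g \<bullet> f x - h \<bullet> \<phi> x) - (\<integral>y. (g \<bullet> f y - h \<bullet> \<phi> y) \<partial>P)))\<^sup>2)
        \<le> ennreal K * ennreal ((norm ((f x - u x) - C))\<^sup>2)"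
      using K by (simp add: ennreal_mult[symmetric])
  qed
  also have "\<dots> \<le> ennreal K * (\<integral>\<^sup>+x. ennreal ((norm ((f x - u x) - C))\<^sup>2) \<partial>P)"
  proof (rule order.eq_iff[THEN iffD1, THEN conjunct1], rule nn_integral_cmult)
    have [measurable]: "u \<in> borel_measurable P" "f \<in> borel_measurable P" using ui fi by auto
    show "(\<lambda>x. ennreal ((norm ((f x - u x) - C))\<^sup>2)) \<in> borel_measurable P" by measurable
  qed
  also have "\<dots> < ennreal e" by (rule ennreal_scale_lt[OF u(2)[folded C_def] K e])
  finally show "\<exists>v\<in>cme_rkhs_fun \<phi>. (\<integral>\<^sup>+x. ennreal ((norm ((g \<bullet> f x - v x) - (\<integral>y. (g \<bullet> f y - v y) \<partial>P)))\<^sup>2) \<partial>P) < ennreal e"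
    by (intro bexI[OF _ rkhs_mem[of h \<phi>]]) simp
qed


lemma part_proj:
  fixes \<phi> :: "'x \<Rightarrow> 'h::{real_inner,banach,second_countable_topology}"
    and f p :: "'x \<Rightarrow> 'g::{real_inner,banach,second_countable_topology}"
  assumes pr: "cme_proj P (cme_tensor \<phi>) f p" and mem: "cme_mem P (cme_tensor \<phi>) p"
    and pm: "\<phi> \<in> borel_measurable P"
  shows "\<exists>q. cme_proj P (cme_rkhs_fun \<phi>) (\<lambda>x. g \<bullet> f x) q \<and> cme_mem P (cme_rkhs_fun \<phi>) q"
proof (intro exI conjI)
  have pL: "p \<in> cme_L2 P" and pc: "cme_closure P (cme_tensor \<phi>) p"
    and orth: "\<forall>u\<in>cme_tensor \<phi>. (\<integral>x. (f x - p x) \<bullet> u x \<partial>P) = 0"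
    using pr unfolding cme_proj_def by auto
  obtain u0 :: "'x \<Rightarrow> 'g" where u0: "u0 \<in> cme_tensor \<phi>" using mem unfolding cme_mem_def by blast
  have qL: "(\<lambda>x. g \<bullet> p x) \<in> cme_L2 P" by (rule L2_bounded_linear[OF bounded_linear_inner_right pL])
  have pmeas: "p \<in> borel_measurable P" using pL unfolding cme_L2_def by simp
  have qc: "cme_closure P (cme_rkhs_fun \<phi>) (\<lambda>x. g \<bullet> p x)" by (rule part_closure[OF pc pmeas pm])
  have qo: "\<forall>u\<in>cme_rkhs_fun \<phi>. (\<integral>x. (g \<bullet> f x - g \<bullet> p x) \<bullet> u x \<partial>P) = 0"
  proof
    fix u assume "u \<in> cme_rkhs_fun \<phi>"
    then obtain h where uh: "u = (\<lambda>x. h \<bullet> \<phi> x)" unfolding cme_rkhs_fun_def by blast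
    have t: "(\<lambda>x. (h \<bullet> \<phi> x) *\<^sub>R g) \<in> cme_tensor \<phi>" by (rule tensor_rank1[OF u0])
    have "(\<integral>x. (g \<bullet> f x - g \<bullet> p x) \<bullet> u x \<partial>P) = (\<integral>x. (f x - p x) \<bullet> ((h \<bullet> \<phi> x) *\<^sub>R g) \<partial>P)"
      unfolding uh by (rule Bochner_Integration.integral_cong) (simp_all add: inner_diff_left inner_commute algebra_simps)
    also have "\<dots> = 0" using orth[rule_format, OF t] by simp
    finally show "(\<integral>x. (g \<bullet> f x - g \<bullet> p x) \<bullet> u x \<partial>P) = 0" .
  qed
  show "cme_proj P (cme_rkhs_fun \<phi>) (\<lambda>x. g \<bullet> f x) (\<lambda>x. g \<bullet> p x)"
    unfolding cme_proj_def using qL qc qo by simp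
  show "cme_mem P (cme_rkhs_fun \<phi>) (\<lambda>x. g \<bullet> p x)" by (rule part_mem[OF mem])
qed

lemma part_projC:
  fixes \<phi> :: "'x \<Rightarrow> 'h::{real_inner,banach,second_countable_topology}"
    and f p :: "'x \<Rightarrow> 'g::{real_inner,banach,second_countable_topology}"
  assumes pr: "cme_projC P (cme_tensor \<phi>) f p" and mem: "cme_memC P (cme_tensor \<phi>) p"
    and ps: "prob_space P" and fL: "f \<in> cme_L2 P" and phiL: "\<phi> \<in> cme_L2 P"
  shows "\<exists>q. cme_projC P (cme_rkhs_fun \<phi>) (\<lambda>x. g \<bullet> f x) q \<and> cme_memC P (cme_rkhs_fun \<phi>) q"
proof (intro exI conjI)
  have pL: "p \<in> cme_L2 P" and pc: "cme_closureC P (cme_tensor \<phi>) p"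
    and orth: "\<forall>u\<in>cme_tensor \<phi>. (\<integral>x. ((f x - p x) - (\<integral>y. (f y - p y) \<partial>P)) \<bullet> (u x - (\<integral>y. u y \<partial>P)) \<partial>P) = 0"
    using pr unfolding cme_projC_def by auto
  obtain u0 :: "'x \<Rightarrow> 'g" where u0: "u0 \<in> cme_tensor \<phi>" using mem unfolding cme_memC_def by blast
  have qL: "(\<lambda>x. g \<bullet> p x) \<in> cme_L2 P" by (rule L2_bounded_linear[OF bounded_linear_inner_right pL])
  have pint: "integrable P p" by (rule L2_integrable[OF ps pL])
  have fint: "integrable P f" by (rule L2_integrable[OF ps fL])
  have phint: "integrable P \<phi>" by (rule L2_integrable[OF ps phiL])
  have qc: "cme_closureC P (cme_rkhs_fun \<phi>) (\<lambda>x. g \<bullet> p x)" by (rule part_closureC[OF pc pint phint])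
  define C where "C = (\<integral>y. (f y - p y) \<partial>P)"
  have IC: "(\<integral>y. (g \<bullet> f y - g \<bullet> p y) \<partial>P) = g \<bullet> C"
  proof -
    have "(\<integral>y. (g \<bullet> f y - g \<bullet> p y) \<partial>P) = (\<integral>y. g \<bullet> (f y - p y) \<partial>P)"
      by (simp add: inner_diff_right)
    also have "\<dots> = g \<bullet> C" unfolding C_def using fint pint by simp
    finally show ?thesis .
  qed
  have qo: "\<forall>u\<in>cme_rkhs_fun \<phi>. (\<integral>x. ((g \<bullet> f x - g \<bullet> p x) - (\<integral>y. (g \<bullet> f y - g \<bullet> p y) \<partial>P)) \<bullet> (u x - (\<integral>y. u y \<partial>P)) \<partial>P) = 0"
  proof
    fix u assume "u \<in> cme_rkhs_fun \<phi>"
    then obtain h where uh: "u = (\<lambda>x. h \<bullet> \<phi> x)" unfolding cme_rkhs_fun_def by blast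
    have t: "(\<lambda>x. (h \<bullet> \<phi> x) *\<^sub>R g) \<in> cme_tensor \<phi>" by (rule tensor_rank1[OF u0])
    define D where "D = (\<integral>y. h \<bullet> \<phi> y \<partial>P)"
    have It: "(\<integral>y. (h \<bullet> \<phi> y) *\<^sub>R g \<partial>P) = D *\<^sub>R g" unfolding D_def using phint by simp
    have "(\<integral>x. ((g \<bullet> f x - g \<bullet> p x) - (\<integral>y. (g \<bullet> f y - g \<bullet> p y) \<partial>P)) \<bullet> (u x - (\<integral>y. u y \<partial>P)) \<partial>P)
        = (\<integral>x. ((f x - p x) - C) \<bullet> ((h \<bullet> \<phi> x) *\<^sub>R g - (\<integral>y. (h \<bullet> \<phi> y) *\<^sub>R g \<partial>P)) \<partial>P)"
      unfolding uh IC It D_def[symmetric]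
      by (rule Bochner_Integration.integral_cong) (simp_all add: inner_diff_left inner_diff_right inner_commute algebra_simps)
    also have "\<dots> = 0" using orth[rule_format, OF t] unfolding C_def by simp
    finally show "(\<integral>x. ((g \<bullet> f x - g \<bullet> p x) - (\<integral>y. (g \<bullet> f y - g \<bullet> p y) \<partial>P)) \<bullet> (u x - (\<integral>y. u y \<partial>P)) \<partial>P) = 0" .
  qed
  show "cme_projC P (cme_rkhs_fun \<phi>) (\<lambda>x. g \<bullet> f x) (\<lambda>x. g \<bullet> p x)"
    unfolding cme_projC_def using qL qc qo by simp
  show "cme_memC P (cme_rkhs_fun \<phi>) (\<lambda>x. g \<bullet> p x)" by (rule part_memC[OF mem])
qed



lemma meas_distr_iff: "measurable (distr M MX X) N = measurable MX N"
  by (rule measurable_cong_sets[OF sets_distr refl])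

lemma L2_to_M:
  fixes g :: "'x \<Rightarrow> 'k::{banach,second_countable_topology}"
  assumes X: "X \<in> M \<rightarrow>\<^sub>M MX" and g: "g \<in> cme_L2 (distr M MX X)"
  shows "(\<lambda>\<omega>. g (X \<omega>)) \<in> cme_L2 M"
proof -
  have gm: "g \<in> borel_measurable MX" and gi: "integrable (distr M MX X) (\<lambda>x. (norm (g x))\<^sup>2)"
    using g unfolding cme_L2_def meas_distr_iff by auto
  have "integrable M (\<lambda>\<omega>. (norm (g (X \<omega>)))\<^sup>2)"
    using gi by (subst (asm) integrable_distr_eq[OF X]) (use gm in simp_all)
  moreover have "(\<lambda>\<omega>. g (X \<omega>)) \<in> borel_measurable M" by (rule measurable_compose[OF X gm])
  ultimately show ?thesis unfolding cme_L2_def by simp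
qed

lemma L2_from_M:
  fixes g :: "'x \<Rightarrow> 'k::{banach,second_countable_topology}"
  assumes X: "X \<in> M \<rightarrow>\<^sub>M MX" and gm: "g \<in> borel_measurable MX"
    and gi: "integrable M (\<lambda>\<omega>. (norm (g (X \<omega>)))\<^sup>2)"
  shows "g \<in> cme_L2 (distr M MX X)"
proof -
  have "integrable (distr M MX X) (\<lambda>x. (norm (g x))\<^sup>2)"
    by (subst integrable_distr_eq[OF X]) (use gm gi in simp_all)
  thus ?thesis using gm unfolding cme_L2_def meas_distr_iff by simp
qed

lemma ind_comp_int:
  fixes g :: "'w \<Rightarrow> 'k::{banach,second_countable_topology}"
  assumes X: "X \<in> M \<rightarrow>\<^sub>M MX" and A: "A \<in> sets MX" and g: "integrable M g"
  shows "integrable M (\<lambda>\<omega>. indicator A (X \<omega>) *\<^sub>R g \<omega>)"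
proof -
  have "integrable M (\<lambda>\<omega>. indicator (X -` A \<inter> space M) \<omega> *\<^sub>R g \<omega>)"
    by (rule integrable_mult_indicator[OF measurable_sets[OF X A] g])
  moreover have eq: "\<And>\<omega>. \<omega> \<in> space M \<Longrightarrow> indicator (X -` A \<inter> space M) \<omega> *\<^sub>R g \<omega> = indicator A (X \<omega>) *\<^sub>R g \<omega>"
    by (simp add: indicator_def)
  ultimately show ?thesis using Bochner_Integration.integrable_cong[where M=M and N=M and f="\<lambda>\<omega>. indicator (X -` A \<inter> space M) \<omega> *\<^sub>R g \<omega>" and g="\<lambda>\<omega>. indicator A (X \<omega>) *\<^sub>R g \<omega>"]
    by simp
qed

lemma vec_eq_inner: "(\<And>h. h \<bullet> x = h \<bullet> y) \<Longrightarrow> x = (y::'a::real_inner)"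
proof -
  assume a: "\<And>h. h \<bullet> x = h \<bullet> y"
  have "(x - y) \<bullet> (x - y) = 0" using a[of "x - y"] by (simp add: inner_diff_right)
  thus ?thesis by simp
qed

lemma ce_vec:
  fixes U :: "'w \<Rightarrow> 'g::{real_inner,banach,second_countable_topology}" and f :: "'x \<Rightarrow> real"
  assumes ps: "prob_space M" and X: "X \<in> M \<rightarrow>\<^sub>M MX" and UL: "U \<in> cme_L2 M"
    and cm: "cme_cond_mean M X MX U m"
    and fm: "f \<in> borel_measurable MX"
    and i1: "integrable M (\<lambda>\<omega>. f (X \<omega>) * (U \<omega> \<bullet> b))"
    and i2: "integrable M (\<lambda>\<omega>. f (X \<omega>) * (m (X \<omega>) \<bullet> b))"
  shows "(\<integral>\<omega>. f (X \<omega>) * (U \<omega> \<bullet> b) \<partial>M) = (\<integral>\<omega>. f (X \<omega>) * (m (X \<omega>) \<bullet> b) \<partial>M)"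
proof -
  interpret prob_space M by fact
  have mL: "m \<in> cme_L2 (distr M MX X)" and cmi: "\<forall>A\<in>sets MX. (\<integral>\<omega>. indicator A (X \<omega>) *\<^sub>R U \<omega> \<partial>M)
      = (\<integral>x. indicator A x *\<^sub>R m x \<partial>distr M MX X)"
    using cm unfolding cme_cond_mean_def by auto
  have mmeas: "m \<in> borel_measurable MX" using mL unfolding cme_L2_def meas_distr_iff by simp
  have mXL: "(\<lambda>\<omega>. m (X \<omega>)) \<in> cme_L2 M" by (rule L2_to_M[OF X mL])
  have Ui: "integrable M U" by (rule L2_integrable[OF ps UL])
  have mXi: "integrable M (\<lambda>\<omega>. m (X \<omega>))" by (rule L2_integrable[OF ps mXL])
  define d where "d \<omega> = U \<omega> \<bullet> b - m (X \<omega>) \<bullet> b" for \<omega>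
  have di: "integrable M d" unfolding d_def using Ui mXi by simp
  have ind: "(\<integral>\<omega>. indicator A (X \<omega>) * d \<omega> \<partial>M) = 0" if A: "A \<in> sets MX" for A
  proof -
    have a1: "integrable M (\<lambda>\<omega>. indicator A (X \<omega>) *\<^sub>R U \<omega>)" by (rule ind_comp_int[OF X A Ui])
    have a2: "integrable M (\<lambda>\<omega>. indicator A (X \<omega>) *\<^sub>R m (X \<omega>))" by (rule ind_comp_int[OF X A mXi])
    have "(\<integral>\<omega>. indicator A (X \<omega>) * d \<omega> \<partial>M)
        = (\<integral>\<omega>. (indicator A (X \<omega>) *\<^sub>R U \<omega>) \<bullet> b - (indicator A (X \<omega>) *\<^sub>R m (X \<omega>)) \<bullet> b \<partial>M)"
      unfolding d_def by (rule Bochner_Integration.integral_cong) (simp_all add: right_diff_distrib)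
    also have "\<dots> = (\<integral>\<omega>. (indicator A (X \<omega>) *\<^sub>R U \<omega>) \<bullet> b \<partial>M) - (\<integral>\<omega>. (indicator A (X \<omega>) *\<^sub>R m (X \<omega>)) \<bullet> b \<partial>M)"
      by (rule Bochner_Integration.integral_diff[OF integrable_bounded_linear[OF bounded_linear_inner_left a1]
            integrable_bounded_linear[OF bounded_linear_inner_left a2]])
    also have "\<dots> = (\<integral>\<omega>. indicator A (X \<omega>) *\<^sub>R U \<omega> \<partial>M) \<bullet> b - (\<integral>\<omega>. indicator A (X \<omega>) *\<^sub>R m (X \<omega>) \<partial>M) \<bullet> b"
      by (simp only: integral_bounded_linear[OF bounded_linear_inner_left a1] integral_bounded_linear[OF bounded_linear_inner_left a2])
    also have "(\<integral>\<omega>. indicator A (X \<omega>) *\<^sub>R m (X \<omega>) \<partial>M) = (\<integral>x. indicator A x *\<^sub>R m x \<partial>distr M MX X)"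
      by (rule integral_distr[OF X, symmetric]) (use A mmeas in simp)
    also have "\<dots> = (\<integral>\<omega>. indicator A (X \<omega>) *\<^sub>R U \<omega> \<partial>M)" using cmi A by simp
    finally show ?thesis by simp
  qed
  have fd: "integrable M (\<lambda>\<omega>. f (X \<omega>) * d \<omega>)"
    unfolding d_def using i1 i2 by (simp add: right_diff_distrib)
  have "(\<integral>\<omega>. f (X \<omega>) * d \<omega> \<partial>M) = 0" by (rule ce_extend[OF X di ind fm fd])
  moreover have "(\<integral>\<omega>. f (X \<omega>) * d \<omega> \<partial>M) = (\<integral>\<omega>. f (X \<omega>) * (U \<omega> \<bullet> b) \<partial>M) - (\<integral>\<omega>. f (X \<omega>) * (m (X \<omega>) \<bullet> b) \<partial>M)"
    unfolding d_def using i1 i2 by (simp add: right_diff_distrib)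
  ultimately show ?thesis by simp
qed


lemma L2_real_prod:
  fixes a c :: "'x \<Rightarrow> real"
  assumes "a \<in> cme_L2 N" "c \<in> cme_L2 N"
  shows "integrable N (\<lambda>x. a x * c x)"
  using L2_inner_integrable[OF assms] by (simp add: inner_real_def)

lemma cov_u:
  fixes \<phi> :: "'x \<Rightarrow> 'h::{real_inner,banach,second_countable_topology}"
    and U :: "'w \<Rightarrow> 'g::{real_inner,banach,second_countable_topology}"
    and m p :: "'x \<Rightarrow> 'g"
  assumes ps: "prob_space M" and X: "X \<in> M \<rightarrow>\<^sub>M MX" and UL: "U \<in> cme_L2 M"
    and cm: "cme_cond_mean M X MX U m"
    and phm: "\<phi> \<in> borel_measurable MX" and VL: "(\<lambda>\<omega>. \<phi> (X \<omega>)) \<in> cme_L2 M"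
    and pr: "cme_proj (distr M MX X) (cme_tensor \<phi>) m p" and mem: "cme_mem (distr M MX X) (cme_tensor \<phi>) p"
  shows "range (cme_ucov M (\<lambda>\<omega>. \<phi> (X \<omega>)) U) \<subseteq> range (cme_ucov M (\<lambda>\<omega>. \<phi> (X \<omega>)) (\<lambda>\<omega>. \<phi> (X \<omega>)))"
proof (rule subsetI)
  define P where "P = distr M MX X"
  define V where "V = (\<lambda>\<omega>. \<phi> (X \<omega>))"
  interpret prob_space M by fact
  have psP: "prob_space P" unfolding P_def by (rule prob_space_distr[OF X])
  have mL: "m \<in> cme_L2 P" using cm unfolding cme_cond_mean_def P_def by simp
  have pL: "p \<in> cme_L2 P" and orth: "\<forall>u\<in>cme_tensor \<phi>. (\<integral>x. (m x - p x) \<bullet> u x \<partial>P) = 0"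
    using pr unfolding cme_proj_def P_def by auto
  have phiL: "\<phi> \<in> cme_L2 P" unfolding P_def
    by (rule L2_from_M[OF X phm]) (use VL in \<open>simp add: cme_L2_def\<close>)
  have mmeas: "m \<in> borel_measurable MX" and pmeas: "p \<in> borel_measurable MX"
    using mL pL unfolding cme_L2_def P_def meas_distr_iff by auto
  fix z assume "z \<in> range (cme_ucov M (\<lambda>\<omega>. \<phi> (X \<omega>)) U)"
  then obtain b where zb: "z = cme_ucov M V U b" unfolding V_def by blast
  obtain u where u: "u \<in> cme_tensor \<phi>" "AE x in P. p x = u x" using mem unfolding cme_mem_def P_def by blast
  obtain A where A: "cme_hilbert_schmidt A" "u = (\<lambda>x. A (\<phi> x))" by (rule tensor_bl[OF u(1)])
  obtain k where k: "\<forall>y. b \<bullet> A y = k \<bullet> y" using hs_adjoint[OF A(1)] by blast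
  have "cme_ucov M V U b = cme_ucov M V V k"
  proof (rule vec_eq_inner)
    fix h
    have hV: "(\<lambda>\<omega>. h \<bullet> V \<omega>) \<in> cme_L2 M" unfolding V_def by (rule L2_bounded_linear[OF bounded_linear_inner_right VL])
    have kV: "(\<lambda>\<omega>. V \<omega> \<bullet> k) \<in> cme_L2 M" unfolding V_def by (rule L2_bounded_linear[OF bounded_linear_inner_left VL])
    have Ub: "(\<lambda>\<omega>. U \<omega> \<bullet> b) \<in> cme_L2 M" by (rule L2_bounded_linear[OF bounded_linear_inner_left UL])
    have mXb: "(\<lambda>\<omega>. m (X \<omega>) \<bullet> b) \<in> cme_L2 M"
      by (rule L2_bounded_linear[OF bounded_linear_inner_left L2_to_M[OF X mL[unfolded P_def]]])
    have hphi: "(\<lambda>x. h \<bullet> \<phi> x) \<in> cme_L2 P" by (rule L2_bounded_linear[OF bounded_linear_inner_right phiL])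
    have mb: "(\<lambda>x. m x \<bullet> b) \<in> cme_L2 P" by (rule L2_bounded_linear[OF bounded_linear_inner_left mL])
    have pb: "(\<lambda>x. p x \<bullet> b) \<in> cme_L2 P" by (rule L2_bounded_linear[OF bounded_linear_inner_left pL])
    have int1: "integrable M (\<lambda>\<omega>. (U \<omega> \<bullet> b) *\<^sub>R V \<omega>)"
      by (rule L2_scaleR_integrable[OF Ub]) (simp add: V_def VL)
    have int2: "integrable M (\<lambda>\<omega>. (V \<omega> \<bullet> k) *\<^sub>R V \<omega>)"
      by (rule L2_scaleR_integrable[OF kV]) (simp add: V_def VL)
    have hphim: "(\<lambda>x. h \<bullet> \<phi> x) \<in> borel_measurable MX" using phm by measurable
    have "h \<bullet> cme_ucov M V U b = (\<integral>\<omega>. h \<bullet> ((U \<omega> \<bullet> b) *\<^sub>R V \<omega>) \<partial>M)"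
      unfolding cme_ucov_def by (rule integral_bounded_linear[OF bounded_linear_inner_right int1, symmetric])
    also have "\<dots> = (\<integral>\<omega>. (h \<bullet> \<phi> (X \<omega>)) * (U \<omega> \<bullet> b) \<partial>M)"
      by (rule Bochner_Integration.integral_cong) (simp_all add: V_def)
    also have "\<dots> = (\<integral>\<omega>. (h \<bullet> \<phi> (X \<omega>)) * (m (X \<omega>) \<bullet> b) \<partial>M)"
      by (rule ce_vec[OF ps X UL cm hphim])
        (use L2_real_prod[OF hV Ub] L2_real_prod[OF hV mXb] in \<open>simp_all add: V_def\<close>)
    also have "\<dots> = (\<integral>x. (h \<bullet> \<phi> x) * (m x \<bullet> b) \<partial>P)"
      unfolding P_def by (rule integral_distr[OF X, symmetric]) (use hphim mmeas in measurable)
    also have "\<dots> = (\<integral>x. (h \<bullet> \<phi> x) * (p x \<bullet> b) \<partial>P)"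
    proof -
      have t: "(\<lambda>x. (h \<bullet> \<phi> x) *\<^sub>R b) \<in> cme_tensor \<phi>" by (rule tensor_rank1[OF u(1)])
      have "0 = (\<integral>x. (m x - p x) \<bullet> ((h \<bullet> \<phi> x) *\<^sub>R b) \<partial>P)" using orth[rule_format, OF t] by simp
      also have "\<dots> = (\<integral>x. (h \<bullet> \<phi> x) * (m x \<bullet> b) - (h \<bullet> \<phi> x) * (p x \<bullet> b) \<partial>P)"
        by (rule Bochner_Integration.integral_cong) (simp_all add: inner_diff_left algebra_simps)
      also have "\<dots> = (\<integral>x. (h \<bullet> \<phi> x) * (m x \<bullet> b) \<partial>P) - (\<integral>x. (h \<bullet> \<phi> x) * (p x \<bullet> b) \<partial>P)"
        by (rule Bochner_Integration.integral_diff[OF L2_real_prod[OF hphi mb] L2_real_prod[OF hphi pb]])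
      finally show ?thesis by simp
    qed
    also have "\<dots> = (\<integral>x. (h \<bullet> \<phi> x) * (k \<bullet> \<phi> x) \<partial>P)"
    proof (rule integral_cong_AE)
      show "(\<lambda>x. (h \<bullet> \<phi> x) * (p x \<bullet> b)) \<in> borel_measurable P"
        unfolding P_def meas_distr_iff using hphim pmeas by measurable
      show "(\<lambda>x. (h \<bullet> \<phi> x) * (k \<bullet> \<phi> x)) \<in> borel_measurable P"
        unfolding P_def meas_distr_iff using phm by measurable
      show "AE x in P. (h \<bullet> \<phi> x) * (p x \<bullet> b) = (h \<bullet> \<phi> x) * (k \<bullet> \<phi> x)"
        using u(2) by (rule eventually_mono) (simp add: A(2) k[rule_format, symmetric] inner_commute)
    qed
    also have "\<dots> = (\<integral>\<omega>. (h \<bullet> V \<omega>) * (k \<bullet> V \<omega>) \<partial>M)"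
      unfolding P_def V_def by (rule integral_distr[OF X]) (use phm in measurable)
    also have "\<dots> = (\<integral>\<omega>. h \<bullet> ((V \<omega> \<bullet> k) *\<^sub>R V \<omega>) \<partial>M)"
      by (rule Bochner_Integration.integral_cong) (simp_all add: inner_commute)
    also have "\<dots> = h \<bullet> cme_ucov M V V k"
      unfolding cme_ucov_def by (rule integral_bounded_linear[OF bounded_linear_inner_right int2])
    finally show "h \<bullet> cme_ucov M V U b = h \<bullet> cme_ucov M V V k" .
  qed
  thus "z \<in> range (cme_ucov M (\<lambda>\<omega>. \<phi> (X \<omega>)) (\<lambda>\<omega>. \<phi> (X \<omega>)))" using zb unfolding V_def by simp
qed


lemma cov_c:
  fixes \<phi> :: "'x \<Rightarrow> 'h::{real_inner,banach,second_countable_topology}"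
    and U :: "'w \<Rightarrow> 'g::{real_inner,banach,second_countable_topology}"
    and m p :: "'x \<Rightarrow> 'g"
  assumes ps: "prob_space M" and X: "X \<in> M \<rightarrow>\<^sub>M MX" and UL: "U \<in> cme_L2 M"
    and cm: "cme_cond_mean M X MX U m"
    and phm: "\<phi> \<in> borel_measurable MX" and VL: "(\<lambda>\<omega>. \<phi> (X \<omega>)) \<in> cme_L2 M"
    and pr: "cme_projC (distr M MX X) (cme_tensor \<phi>) m p" and mem: "cme_memC (distr M MX X) (cme_tensor \<phi>) p"
  shows "range (cme_cov M (\<lambda>\<omega>. \<phi> (X \<omega>)) U) \<subseteq> range (cme_cov M (\<lambda>\<omega>. \<phi> (X \<omega>)) (\<lambda>\<omega>. \<phi> (X \<omega>)))"
proof (rule subsetI)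
  define P where "P = distr M MX X"
  define V where "V = (\<lambda>\<omega>. \<phi> (X \<omega>))"
  interpret prob_space M by fact
  have psP: "prob_space P" unfolding P_def by (rule prob_space_distr[OF X])
  interpret P: prob_space P by (rule psP)
  have mL: "m \<in> cme_L2 P" using cm unfolding cme_cond_mean_def P_def by simp
  have pL: "p \<in> cme_L2 P"
    and orth: "\<forall>u\<in>cme_tensor \<phi>. (\<integral>x. ((m x - p x) - (\<integral>y. (m y - p y) \<partial>P)) \<bullet> (u x - (\<integral>y. u y \<partial>P)) \<partial>P) = 0"
    using pr unfolding cme_projC_def P_def by auto
  have phiL: "\<phi> \<in> cme_L2 P" unfolding P_def
    by (rule L2_from_M[OF X phm]) (use VL in \<open>simp add: cme_L2_def\<close>)
  have mmeas: "m \<in> borel_measurable MX" and pmeas: "p \<in> borel_measurable MX"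
    using mL pL unfolding cme_L2_def P_def meas_distr_iff by auto
  have VL': "V \<in> cme_L2 M" unfolding V_def by (rule VL)
  have Vi: "integrable M V" by (rule L2_integrable[OF ps VL'])
  have Ui: "integrable M U" by (rule L2_integrable[OF ps UL])
  have phii: "integrable P \<phi>" by (rule L2_integrable[OF psP phiL])
  define \<mu>V where "\<mu>V = (\<integral>\<omega>. V \<omega> \<partial>M)"
  define \<mu>U where "\<mu>U = (\<integral>\<omega>. U \<omega> \<partial>M)"
  fix z assume "z \<in> range (cme_cov M (\<lambda>\<omega>. \<phi> (X \<omega>)) U)"
  then obtain b where zb: "z = cme_cov M V U b" unfolding V_def by blast
  obtain u c where u: "u \<in> cme_tensor \<phi>" "AE x in P. p x = u x + c" using mem unfolding cme_memC_def P_def by blast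
  obtain A where A: "cme_hilbert_schmidt A" "u = (\<lambda>x. A (\<phi> x))" by (rule tensor_bl[OF u(1)])
  obtain k where k: "\<forall>y. b \<bullet> A y = k \<bullet> y" using hs_adjoint[OF A(1)] by blast
  have "cme_cov M V U b = cme_cov M V V k"
  proof (rule vec_eq_inner)
    fix h
    define \<nu> where "\<nu> = h \<bullet> \<mu>V"
    define \<kappa> where "\<kappa> = k \<bullet> \<mu>V"
    have hV: "(\<lambda>\<omega>. h \<bullet> V \<omega>) \<in> cme_L2 M" by (rule L2_bounded_linear[OF bounded_linear_inner_right VL'])
    have kV: "(\<lambda>\<omega>. k \<bullet> V \<omega>) \<in> cme_L2 M" by (rule L2_bounded_linear[OF bounded_linear_inner_right VL'])
    have aL: "(\<lambda>\<omega>. h \<bullet> V \<omega> - \<nu>) \<in> cme_L2 M" by (rule L2_diff[OF hV L2_const[OF ps]])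
    have Ub: "(\<lambda>\<omega>. U \<omega> \<bullet> b) \<in> cme_L2 M" by (rule L2_bounded_linear[OF bounded_linear_inner_left UL])
    have mXb: "(\<lambda>\<omega>. m (X \<omega>) \<bullet> b) \<in> cme_L2 M"
      by (rule L2_bounded_linear[OF bounded_linear_inner_left L2_to_M[OF X mL[unfolded P_def]]])
    have hphi: "(\<lambda>x. h \<bullet> \<phi> x) \<in> cme_L2 P" by (rule L2_bounded_linear[OF bounded_linear_inner_right phiL])
    have aPL: "(\<lambda>x. h \<bullet> \<phi> x - \<nu>) \<in> cme_L2 P" by (rule L2_diff[OF hphi L2_const[OF psP]])
    have kphi: "(\<lambda>x. k \<bullet> \<phi> x) \<in> cme_L2 P" by (rule L2_bounded_linear[OF bounded_linear_inner_right phiL])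
    have mb: "(\<lambda>x. m x \<bullet> b) \<in> cme_L2 P" by (rule L2_bounded_linear[OF bounded_linear_inner_left mL])
    have pb: "(\<lambda>x. p x \<bullet> b) \<in> cme_L2 P" by (rule L2_bounded_linear[OF bounded_linear_inner_left pL])
    have VcL: "(\<lambda>\<omega>. V \<omega> - \<mu>V) \<in> cme_L2 M" by (rule L2_diff[OF VL' L2_const[OF ps]])
    have UcbL: "(\<lambda>\<omega>. (U \<omega> - \<mu>U) \<bullet> b) \<in> cme_L2 M"
      by (rule L2_bounded_linear[OF bounded_linear_inner_left L2_diff[OF UL L2_const[OF ps]]])
    have VckL: "(\<lambda>\<omega>. (V \<omega> - \<mu>V) \<bullet> k) \<in> cme_L2 M"
      by (rule L2_bounded_linear[OF bounded_linear_inner_left VcL])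
    have int1: "integrable M (\<lambda>\<omega>. ((U \<omega> - \<mu>U) \<bullet> b) *\<^sub>R (V \<omega> - \<mu>V))"
      by (rule L2_scaleR_integrable[OF UcbL VcL])
    have int2: "integrable M (\<lambda>\<omega>. ((V \<omega> - \<mu>V) \<bullet> k) *\<^sub>R (V \<omega> - \<mu>V))"
      by (rule L2_scaleR_integrable[OF VckL VcL])
    have hphim: "(\<lambda>x. h \<bullet> \<phi> x - \<nu>) \<in> borel_measurable MX" using phm by measurable
    have intaM: "integrable M (\<lambda>\<omega>. h \<bullet> V \<omega> - \<nu>)" by (rule L2_integrable[OF ps aL])
    have intaP: "integrable P (\<lambda>x. h \<bullet> \<phi> x - \<nu>)" by (rule L2_integrable[OF psP aPL])
    have zeroM: "(\<integral>\<omega>. h \<bullet> V \<omega> - \<nu> \<partial>M) = 0"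
    proof -
      have "(\<integral>\<omega>. h \<bullet> V \<omega> - \<nu> \<partial>M) = (\<integral>\<omega>. h \<bullet> V \<omega> \<partial>M) - \<nu>"
        using Vi by (subst Bochner_Integration.integral_diff) (simp_all add: prob_space)
      also have "(\<integral>\<omega>. h \<bullet> V \<omega> \<partial>M) = \<nu>" unfolding \<nu>_def \<mu>V_def using Vi by simp
      finally show ?thesis by simp
    qed
    have intPhi: "(\<integral>x. h \<bullet> \<phi> x \<partial>P) = \<nu>"
    proof -
      have "(\<integral>x. h \<bullet> \<phi> x \<partial>P) = (\<integral>\<omega>. h \<bullet> V \<omega> \<partial>M)"
        unfolding P_def V_def by (rule integral_distr[OF X]) (use phm in measurable)
      also have "\<dots> = \<nu>" unfolding \<nu>_def \<mu>V_def using Vi by simp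
      finally show ?thesis .
    qed
    have zeroP: "(\<integral>x. h \<bullet> \<phi> x - \<nu> \<partial>P) = 0"
    proof -
      have hpi: "integrable P (\<lambda>x. h \<bullet> \<phi> x)" using phii by simp
      have "(\<integral>x. h \<bullet> \<phi> x - \<nu> \<partial>P) = (\<integral>x. h \<bullet> \<phi> x \<partial>P) - \<nu>"
        using hpi by (subst Bochner_Integration.integral_diff) (simp_all add: P.prob_space)
      thus ?thesis using intPhi by simp
    qed
    have "h \<bullet> cme_cov M V U b = (\<integral>\<omega>. h \<bullet> (((U \<omega> - \<mu>U) \<bullet> b) *\<^sub>R (V \<omega> - \<mu>V)) \<partial>M)"
      unfolding cme_cov_def \<mu>U_def[symmetric] \<mu>V_def[symmetric]
      by (rule integral_bounded_linear[OF bounded_linear_inner_right int1, symmetric])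
    also have "\<dots> = (\<integral>\<omega>. (h \<bullet> V \<omega> - \<nu>) * (U \<omega> \<bullet> b) - (\<mu>U \<bullet> b) * (h \<bullet> V \<omega> - \<nu>) \<partial>M)"
      by (rule Bochner_Integration.integral_cong) (simp_all add: \<nu>_def inner_diff_left inner_diff_right algebra_simps)
    also have "\<dots> = (\<integral>\<omega>. (h \<bullet> V \<omega> - \<nu>) * (U \<omega> \<bullet> b) \<partial>M) - (\<integral>\<omega>. (\<mu>U \<bullet> b) * (h \<bullet> V \<omega> - \<nu>) \<partial>M)"
      by (rule Bochner_Integration.integral_diff[OF L2_real_prod[OF aL Ub] integrable_mult_right[OF intaM]])
    also have "(\<integral>\<omega>. (\<mu>U \<bullet> b) * (h \<bullet> V \<omega> - \<nu>) \<partial>M) = 0" using zeroM by simp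
    also have "(\<integral>\<omega>. (h \<bullet> V \<omega> - \<nu>) * (U \<omega> \<bullet> b) \<partial>M) = (\<integral>\<omega>. (h \<bullet> \<phi> (X \<omega>) - \<nu>) * (U \<omega> \<bullet> b) \<partial>M)"
      by (simp add: V_def)
    also have "\<dots> = (\<integral>\<omega>. (h \<bullet> \<phi> (X \<omega>) - \<nu>) * (m (X \<omega>) \<bullet> b) \<partial>M)"
      by (rule ce_vec[OF ps X UL cm hphim])
        (use L2_real_prod[OF aL Ub] L2_real_prod[OF aL mXb] in \<open>simp_all add: V_def\<close>)
    also have "\<dots> = (\<integral>x. (h \<bullet> \<phi> x - \<nu>) * (m x \<bullet> b) \<partial>P)"
      unfolding P_def by (rule integral_distr[OF X, symmetric]) (use hphim mmeas in measurable)
    also have "\<dots> = (\<integral>x. (h \<bullet> \<phi> x - \<nu>) * (p x \<bullet> b) \<partial>P)"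
    proof -
      have t: "(\<lambda>x. (h \<bullet> \<phi> x) *\<^sub>R b) \<in> cme_tensor \<phi>" by (rule tensor_rank1[OF u(1)])
      define C where "C = (\<integral>y. (m y - p y) \<partial>P)"
      have It: "(\<integral>y. (h \<bullet> \<phi> y) *\<^sub>R b \<partial>P) = \<nu> *\<^sub>R b" using phii intPhi by simp
      have "0 = (\<integral>x. ((m x - p x) - C) \<bullet> ((h \<bullet> \<phi> x) *\<^sub>R b - (\<integral>y. (h \<bullet> \<phi> y) *\<^sub>R b \<partial>P)) \<partial>P)"
        using orth[rule_format, OF t] unfolding C_def by simp
      also have "\<dots> = (\<integral>x. ((h \<bullet> \<phi> x - \<nu>) * (m x \<bullet> b) - (h \<bullet> \<phi> x - \<nu>) * (p x \<bullet> b)) - (C \<bullet> b) * (h \<bullet> \<phi> x - \<nu>) \<partial>P)"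
        unfolding It
        by (rule Bochner_Integration.integral_cong) (simp_all add: inner_diff_left inner_diff_right algebra_simps)
      also have "\<dots> = (\<integral>x. (h \<bullet> \<phi> x - \<nu>) * (m x \<bullet> b) - (h \<bullet> \<phi> x - \<nu>) * (p x \<bullet> b) \<partial>P) - (\<integral>x. (C \<bullet> b) * (h \<bullet> \<phi> x - \<nu>) \<partial>P)"
        by (rule Bochner_Integration.integral_diff[OF Bochner_Integration.integrable_diff[OF L2_real_prod[OF aPL mb] L2_real_prod[OF aPL pb]] integrable_mult_right[OF intaP]])
      also have "(\<integral>x. (C \<bullet> b) * (h \<bullet> \<phi> x - \<nu>) \<partial>P) = 0" using zeroP by simp
      also have "(\<integral>x. (h \<bullet> \<phi> x - \<nu>) * (m x \<bullet> b) - (h \<bullet> \<phi> x - \<nu>) * (p x \<bullet> b) \<partial>P)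
          = (\<integral>x. (h \<bullet> \<phi> x - \<nu>) * (m x \<bullet> b) \<partial>P) - (\<integral>x. (h \<bullet> \<phi> x - \<nu>) * (p x \<bullet> b) \<partial>P)"
        by (rule Bochner_Integration.integral_diff[OF L2_real_prod[OF aPL mb] L2_real_prod[OF aPL pb]])
      finally show ?thesis by simp
    qed
    also have "\<dots> = (\<integral>x. (h \<bullet> \<phi> x - \<nu>) * (k \<bullet> \<phi> x) + (c \<bullet> b) * (h \<bullet> \<phi> x - \<nu>) \<partial>P)"
    proof (rule integral_cong_AE)
      show "(\<lambda>x. (h \<bullet> \<phi> x - \<nu>) * (p x \<bullet> b)) \<in> borel_measurable P"
        unfolding P_def meas_distr_iff using hphim pmeas by measurable
      show "(\<lambda>x. (h \<bullet> \<phi> x - \<nu>) * (k \<bullet> \<phi> x) + (c \<bullet> b) * (h \<bullet> \<phi> x - \<nu>)) \<in> borel_measurable P"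
        unfolding P_def meas_distr_iff using phm by measurable
      show "AE x in P. (h \<bullet> \<phi> x - \<nu>) * (p x \<bullet> b) = (h \<bullet> \<phi> x - \<nu>) * (k \<bullet> \<phi> x) + (c \<bullet> b) * (h \<bullet> \<phi> x - \<nu>)"
        using u(2) by (rule eventually_mono) (simp add: A(2) k[rule_format, symmetric] inner_commute inner_add_left algebra_simps)
    qed
    also have "\<dots> = (\<integral>x. (h \<bullet> \<phi> x - \<nu>) * (k \<bullet> \<phi> x) \<partial>P) + (\<integral>x. (c \<bullet> b) * (h \<bullet> \<phi> x - \<nu>) \<partial>P)"
      by (rule Bochner_Integration.integral_add[OF L2_real_prod[OF aPL kphi] integrable_mult_right[OF intaP]])
    also have "(\<integral>x. (c \<bullet> b) * (h \<bullet> \<phi> x - \<nu>) \<partial>P) = 0" using zeroP by simp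
    also have "(\<integral>x. (h \<bullet> \<phi> x - \<nu>) * (k \<bullet> \<phi> x) \<partial>P) = (\<integral>\<omega>. (h \<bullet> V \<omega> - \<nu>) * (k \<bullet> V \<omega>) \<partial>M)"
      unfolding P_def V_def by (rule integral_distr[OF X]) (use phm in measurable)
    also have "\<dots> = (\<integral>\<omega>. (h \<bullet> V \<omega> - \<nu>) * (k \<bullet> V \<omega>) - \<kappa> * (h \<bullet> V \<omega> - \<nu>) \<partial>M)"
    proof -
      have "(\<integral>\<omega>. (h \<bullet> V \<omega> - \<nu>) * (k \<bullet> V \<omega>) - \<kappa> * (h \<bullet> V \<omega> - \<nu>) \<partial>M)
          = (\<integral>\<omega>. (h \<bullet> V \<omega> - \<nu>) * (k \<bullet> V \<omega>) \<partial>M) - (\<integral>\<omega>. \<kappa> * (h \<bullet> V \<omega> - \<nu>) \<partial>M)"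
        by (rule Bochner_Integration.integral_diff[OF L2_real_prod[OF aL kV] integrable_mult_right[OF intaM]])
      also have "(\<integral>\<omega>. \<kappa> * (h \<bullet> V \<omega> - \<nu>) \<partial>M) = 0" using zeroM by simp
      finally show ?thesis by simp
    qed
    also have "\<dots> = (\<integral>\<omega>. h \<bullet> (((V \<omega> - \<mu>V) \<bullet> k) *\<^sub>R (V \<omega> - \<mu>V)) \<partial>M)"
      by (rule Bochner_Integration.integral_cong) (simp_all add: \<nu>_def \<kappa>_def inner_diff_left inner_diff_right inner_commute algebra_simps)
    also have "\<dots> = h \<bullet> cme_cov M V V k"
      unfolding cme_cov_def \<mu>V_def[symmetric]
      by (rule integral_bounded_linear[OF bounded_linear_inner_right int2])
    finally show "h \<bullet> cme_cov M V U b = h \<bullet> cme_cov M V V k" by simp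
  qed
  thus "z \<in> range (cme_cov M (\<lambda>\<omega>. \<phi> (X \<omega>)) (\<lambda>\<omega>. \<phi> (X \<omega>)))" using zb unfolding V_def by simp
qed


theorem mainTheorem15:
  fixes M :: "'w measure" and MX :: "'x measure" and MY :: "'y measure"
    and X :: "'w \<Rightarrow> 'x" and Y :: "'w \<Rightarrow> 'y"
    and k :: "'x \<Rightarrow> 'x \<Rightarrow> real" and l :: "'y \<Rightarrow> 'y \<Rightarrow> real"
    and \<phi> :: "'x \<Rightarrow> 'h::{real_inner,banach,second_countable_topology}"
    and \<psi> :: "'y \<Rightarrow> 'g::{real_inner,banach,second_countable_topology}"
    and m :: "'x \<Rightarrow> 'g"
  assumes prob: "prob_space M"
    and X_meas: "X \<in> M \<rightarrow>\<^sub>M MX" and Y_meas: "Y \<in> M \<rightarrow>\<^sub>M MY"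
    and k_meas: "(\<lambda>(x, x'). k x x') \<in> borel_measurable (MX \<Otimes>\<^sub>M MX)"
    and l_meas: "(\<lambda>(y, y'). l y y') \<in> borel_measurable (MY \<Otimes>\<^sub>M MY)"
    and k_sym: "\<forall>x\<in>space MX. \<forall>x'\<in>space MX. k x x' = k x' x"
    and l_sym: "\<forall>y\<in>space MY. \<forall>y'\<in>space MY. l y y' = l y' y"
    and k_pd: "\<forall>xs c. set xs \<subseteq> space MX \<longrightarrow>
                 (\<Sum>i<length xs. \<Sum>j<length xs. c i * c j * k (xs ! i) (xs ! j)) \<ge> 0"
    and l_pd: "\<forall>ys c. set ys \<subseteq> space MY \<longrightarrow>
                 (\<Sum>i<length ys. \<Sum>j<length ys. c i * c j * l (ys ! i) (ys ! j)) \<ge> 0"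
    and k_rep: "\<forall>x\<in>space MX. \<forall>x'\<in>space MX. \<phi> x \<bullet> \<phi> x' = k x x'"
    and l_rep: "\<forall>y\<in>space MY. \<forall>y'\<in>space MY. \<psi> y \<bullet> \<psi> y' = l y y'"
    and H_rkhs: "\<forall>h. (\<forall>x\<in>space MX. h \<bullet> \<phi> x = 0) \<longrightarrow> h = 0"
    and G_rkhs: "\<forall>g. (\<forall>y\<in>space MY. g \<bullet> \<psi> y = 0) \<longrightarrow> g = 0"
    and \<phi>_meas: "\<phi> \<in> borel_measurable MX" and \<psi>_meas: "\<psi> \<in> borel_measurable MY"
    and \<phi>_inj: "inj_on \<phi> (space MX)"
    and V_L2: "integrable M (\<lambda>\<omega>. (norm (\<phi> (X \<omega>)))\<^sup>2)"
    and U_L2: "integrable M (\<lambda>\<omega>. (norm (\<psi> (Y \<omega>)))\<^sup>2)"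
    and H_ae: "\<forall>h. (AE x in distr M MX X. h \<bullet> \<phi> x = 0) \<longrightarrow> h = 0"
    and m_cm: "cme_cond_mean M X MX (\<lambda>\<omega>. \<psi> (Y \<omega>)) m"
  shows
    "(cme_mem (distr M MX X) (cme_tensor \<phi>) m \<longrightarrow>
        (\<forall>g. cme_mem (distr M MX X) (cme_rkhs_fun \<phi>) (\<lambda>x. g \<bullet> m x)))
   \<and> (cme_memC (distr M MX X) (cme_tensor \<phi>) m \<longrightarrow>
        (\<forall>g. cme_memC (distr M MX X) (cme_rkhs_fun \<phi>) (\<lambda>x. g \<bullet> m x)))
   \<and> ((\<exists>p. cme_projC (distr M MX X) (cme_tensor \<phi>) m p \<and> cme_memC (distr M MX X) (cme_tensor \<phi>) p) \<longrightarrow>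
        (\<forall>g. \<exists>p. cme_projC (distr M MX X) (cme_rkhs_fun \<phi>) (\<lambda>x. g \<bullet> m x) p
                  \<and> cme_memC (distr M MX X) (cme_rkhs_fun \<phi>) p))
   \<and> ((\<exists>p. cme_proj (distr M MX X) (cme_tensor \<phi>) m p \<and> cme_mem (distr M MX X) (cme_tensor \<phi>) p) \<longrightarrow>
        (\<forall>g. \<exists>p. cme_proj (distr M MX X) (cme_rkhs_fun \<phi>) (\<lambda>x. g \<bullet> m x) p
                  \<and> cme_mem (distr M MX X) (cme_rkhs_fun \<phi>) p))
   \<and> (cme_closure (distr M MX X) (cme_tensor \<phi>) m \<longrightarrow>
        (\<forall>g. cme_closure (distr M MX X) (cme_rkhs_fun \<phi>) (\<lambda>x. g \<bullet> m x)))
   \<and> (cme_closureC (distr M MX X) (cme_tensor \<phi>) m \<longrightarrow>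
        (\<forall>g. cme_closureC (distr M MX X) (cme_rkhs_fun \<phi>) (\<lambda>x. g \<bullet> m x)))
   \<and> ((\<exists>p. cme_projC (distr M MX X) (cme_tensor \<phi>) m p \<and> cme_memC (distr M MX X) (cme_tensor \<phi>) p) \<longrightarrow>
        range (cme_cov M (\<lambda>\<omega>. \<phi> (X \<omega>)) (\<lambda>\<omega>. \<psi> (Y \<omega>))) \<subseteq> range (cme_cov M (\<lambda>\<omega>. \<phi> (X \<omega>)) (\<lambda>\<omega>. \<phi> (X \<omega>))))
   \<and> ((\<exists>p. cme_proj (distr M MX X) (cme_tensor \<phi>) m p \<and> cme_mem (distr M MX X) (cme_tensor \<phi>) p) \<longrightarrow>
        range (cme_ucov M (\<lambda>\<omega>. \<phi> (X \<omega>)) (\<lambda>\<omega>. \<psi> (Y \<omega>))) \<subseteq> range (cme_ucov M (\<lambda>\<omega>. \<phi> (X \<omega>)) (\<lambda>\<omega>. \<phi> (X \<omega>))))"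
  proof -
  define P where "P = distr M MX X"
  interpret prob_space M by (rule prob)
  have psP: "prob_space P" unfolding P_def by (rule prob_space_distr[OF X_meas])
  have mL: "m \<in> cme_L2 P" using m_cm unfolding cme_cond_mean_def P_def by simp
  have mmP: "m \<in> borel_measurable P" using mL unfolding cme_L2_def by simp
  have miP: "integrable P m" by (rule L2_integrable[OF psP mL])
  have UL: "(\<lambda>\<omega>. \<psi> (Y \<omega>)) \<in> cme_L2 M"
    unfolding cme_L2_def using measurable_compose[OF Y_meas \<psi>_meas] U_L2 by simp
  have VL: "(\<lambda>\<omega>. \<phi> (X \<omega>)) \<in> cme_L2 M"
    unfolding cme_L2_def using measurable_compose[OF X_meas \<phi>_meas] V_L2 by simp
  have phiL: "\<phi> \<in> cme_L2 P" unfolding P_def by (rule L2_from_M[OF X_meas \<phi>_meas V_L2])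
  have phmP: "\<phi> \<in> borel_measurable P" unfolding P_def meas_distr_iff by (rule \<phi>_meas)
  have phiP: "integrable P \<phi>" by (rule L2_integrable[OF psP phiL])
  show ?thesis
    unfolding P_def[symmetric]
  proof (intro conjI impI allI)
    fix g show "cme_mem P (cme_rkhs_fun \<phi>) (\<lambda>x. g \<bullet> m x)" if "cme_mem P (cme_tensor \<phi>) m"
      by (rule part_mem[OF that])
  next
    fix g show "cme_memC P (cme_rkhs_fun \<phi>) (\<lambda>x. g \<bullet> m x)" if "cme_memC P (cme_tensor \<phi>) m"
      by (rule part_memC[OF that])
  next
    fix g assume "\<exists>p. cme_projC P (cme_tensor \<phi>) m p \<and> cme_memC P (cme_tensor \<phi>) p"
    then obtain p where "cme_projC P (cme_tensor \<phi>) m p" "cme_memC P (cme_tensor \<phi>) p" by blast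
    thus "\<exists>p. cme_projC P (cme_rkhs_fun \<phi>) (\<lambda>x. g \<bullet> m x) p \<and> cme_memC P (cme_rkhs_fun \<phi>) p"
      by (rule part_projC[OF _ _ psP mL phiL])
  next
    fix g assume "\<exists>p. cme_proj P (cme_tensor \<phi>) m p \<and> cme_mem P (cme_tensor \<phi>) p"
    then obtain p where "cme_proj P (cme_tensor \<phi>) m p" "cme_mem P (cme_tensor \<phi>) p" by blast
    thus "\<exists>p. cme_proj P (cme_rkhs_fun \<phi>) (\<lambda>x. g \<bullet> m x) p \<and> cme_mem P (cme_rkhs_fun \<phi>) p"
      by (rule part_proj[OF _ _ phmP])
  next
    fix g show "cme_closure P (cme_rkhs_fun \<phi>) (\<lambda>x. g \<bullet> m x)" if "cme_closure P (cme_tensor \<phi>) m"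
      by (rule part_closure[OF that mmP phmP])
  next
    fix g show "cme_closureC P (cme_rkhs_fun \<phi>) (\<lambda>x. g \<bullet> m x)" if "cme_closureC P (cme_tensor \<phi>) m"
      by (rule part_closureC[OF that miP phiP])
  next
    assume "\<exists>p. cme_projC P (cme_tensor \<phi>) m p \<and> cme_memC P (cme_tensor \<phi>) p"
    then obtain p where "cme_projC P (cme_tensor \<phi>) m p" "cme_memC P (cme_tensor \<phi>) p" by blast
    thus "range (cme_cov M (\<lambda>\<omega>. \<phi> (X \<omega>)) (\<lambda>\<omega>. \<psi> (Y \<omega>))) \<subseteq> range (cme_cov M (\<lambda>\<omega>. \<phi> (X \<omega>)) (\<lambda>\<omega>. \<phi> (X \<omega>)))"
      unfolding P_def by (rule cov_c[OF prob X_meas UL m_cm \<phi>_meas VL])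
  next
    assume "\<exists>p. cme_proj P (cme_tensor \<phi>) m p \<and> cme_mem P (cme_tensor \<phi>) p"
    then obtain p where "cme_proj P (cme_tensor \<phi>) m p" "cme_mem P (cme_tensor \<phi>) p" by blast
    thus "range (cme_ucov M (\<lambda>\<omega>. \<phi> (X \<omega>)) (\<lambda>\<omega>. \<psi> (Y \<omega>))) \<subseteq> range (cme_ucov M (\<lambda>\<omega>. \<phi> (X \<omega>)) (\<lambda>\<omega>. \<phi> (X \<omega>)))"
      unfolding P_def by (rule cov_u[OF prob X_meas UL m_cm \<phi>_meas VL])
  qed
qed

end
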